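(* Let $S$ be a finite set. The comma category $(k\downarrow *_S)$ is equivalent to the category $\mathrm I_S$ whose objects are connected graphs with set of outer flags equal to $S$, and whose morphisms $\Gamma\to\Gamma'$ are graph morphisms which are composites of isomorphisms and contractions of non-loop edges (i.e. spanning-forest contractions) and whose flag map restricts to the identity on $S$.
   Context: A graph $\Gamma=(F,V,\partial,\imath)$ consists of finite sets $F$ (flags) and $V$ (vertices), a map $\partial:F\to V$ and an involution $\imath$ of $F$; 2-element orbits of $\imath$ are edges, fixed points are outer flags. A graph morphism $\phi:\Gamma\to\Gamma'$ is a triple $(\phi_V,\phi^F,\imath_\phi)$ with $\phi_V:V\to V'$ surjective, $\phi^F:F'\to F$ injective and $\imath_\phi$ a fixed-point-free involution of $F\setminus\phi^F(F')$, such that $\phi_V\partial\phi^F=\partial'$, $\phi_V\partial(f)=\phi_V\partial(\imath_\phi f)$ for $f\notin\phi^F(F')$, each $f\notin\phi^F(F')$ either lies on an edge $\{f,\imath f\}$ with $\imath_\phi f=\imath f$ or $f,\imath_\phi f$ are outer flags, and $\imath\phi^F(f')=\phi^F\imath'(f')$ whenever $\phi^F(f')$ lies on an edge. The simple contraction of an edge $\{s,t\}$ with $\partial s\neq\partial t$ is (quotient $V\to V/(\partial s\sim\partial t)$, inclusion $F\setminus\{s,t\}\hookrightarrow F$, $\imath_\phi(s)=t$). An aggregate is a graph with $\imath=\mathrm{id}$; $*_S$ is the one-vertex aggregate with flags $S$. For distinct outer flags $s,t$ of an aggregate, the virtual edge (if $\partial s\ne\partial t$) resp. loop (if $\partial s=\partial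 t$) contraction is the morphism (quotient $V\to V/(\partial s\sim\partial t)$, inclusion $F\setminus\{s,t\}\hookrightarrow F$, $\imath_\phi(s)=t$). $\mathrm{Agg}^{\rm ctd}$: aggregates with morphisms generated by isomorphisms and virtual edge and loop contractions; $\mathrm{Agg}^{\rm forest}$: generated by isomorphisms and virtual edge contractions; $k$ the inclusion. The comma category $(k\downarrow *_S)$ has objects pairs $(X,\phi)$ with $X$ an aggregate and $\phi:X\to *_S$ in $\mathrm{Agg}^{\rm ctd}$, and morphisms $\psi:X\to X'$ in $\mathrm{Agg}^{\rm forest}$ with $\phi'\psi=\phi$. *)

theory Defs
  imports Main
begin

record ('f,'v) graph =
  flags :: "'f set"
  verts :: "'v set"
  bd    :: "'f \<Rightarrow> 'v"
  gi    :: "'f \<Rightarrow> 'f"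

record ('f,'v) gmor =
  mV :: "'v \<Rightarrow> 'v"
  mF :: "'f \<Rightarrow> 'f"
  mI :: "'f \<Rightarrow> 'f"

text \<open>Well-formed graph; values outside the carriers are fixed to undefined,
  so that graphs and morphisms are determined by their carrier data.\<close>
definition wf_graph :: "('f,'v) graph \<Rightarrow> bool" where
  "wf_graph G \<longleftrightarrow> finite (flags G) \<and> finite (verts G) \<and>
     (\<forall>f\<in>flags G. bd G f \<in> verts G \<and> gi G f \<in> flags G \<and> gi G (gi G f) = f) \<and>
     (\<forall>f. f \<notin> flags G \<longrightarrow> bd G f = undefined \<and> gi G f = undefined)"

definition outer_flags :: "('f,'v) graph \<Rightarrow> 'f set" where
  "outer_flags G = {f\<in>flags G. gi G f = f}"

definition aggregate :: "('f,'v) graph \<Rightarrow> bool" where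
  "aggregate G \<longleftrightarrow> wf_graph G \<and> (\<forall>f\<in>flags G. gi G f = f)"

definition adj :: "('f,'v) graph \<Rightarrow> ('v \<times> 'v) set" where
  "adj G = {(bd G f, bd G (gi G f)) | f. f \<in> flags G \<and> gi G f \<noteq> f}"

definition connected_graph :: "('f,'v) graph \<Rightarrow> bool" where
  "connected_graph G \<longleftrightarrow> wf_graph G \<and> verts G \<noteq> {} \<and>
     (\<forall>v\<in>verts G. \<forall>w\<in>verts G. (v,w) \<in> (adj G)\<^sup>*)"

definition star :: "'f set \<Rightarrow> 'v \<Rightarrow> ('f,'v) graph" where
  "star S v0 = \<lparr> flags = S, verts = {v0},
     bd = (\<lambda>f. if f \<in> S then v0 else undefined),
     gi = (\<lambda>f. if f \<in> S then f else undefined) \<rparr>"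

definition graph_morphism :: "('f,'v) graph \<Rightarrow> ('f,'v) graph \<Rightarrow> ('f,'v) gmor \<Rightarrow> bool" where
  "graph_morphism G H p \<longleftrightarrow> wf_graph G \<and> wf_graph H \<and>
     mV p ` verts G = verts H \<and>
     mF p ` flags H \<subseteq> flags G \<and> inj_on (mF p) (flags H) \<and>
     (\<forall>f\<in>flags G - mF p ` flags H.
         mI p f \<in> flags G - mF p ` flags H \<and> mI p (mI p f) = f \<and> mI p f \<noteq> f) \<and>
     (\<forall>f'\<in>flags H. mV p (bd G (mF p f')) = bd H f') \<and>
     (\<forall>f\<in>flags G - mF p ` flags H. mV p (bd G f) = mV p (bd G (mI p f))) \<and>
     (\<forall>f\<in>flags G - mF p ` flags H.
         (gi G f \<noteq> f \<and> mI p f = gi G f) \<or> (gi G f = f \<and> gi G (mI p f) = mI p f)) \<and>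
     (\<forall>f'\<in>flags H. gi G (mF p f') \<noteq> mF p f' \<longrightarrow> gi G (mF p f') = mF p (gi H f')) \<and>
     (\<forall>v. v \<notin> verts G \<longrightarrow> mV p v = undefined) \<and>
     (\<forall>f'. f' \<notin> flags H \<longrightarrow> mF p f' = undefined) \<and>
     (\<forall>f. f \<notin> flags G - mF p ` flags H \<longrightarrow> mI p f = undefined)"

definition gid :: "('f,'v) graph \<Rightarrow> ('f,'v) gmor" where
  "gid G = \<lparr> mV = (\<lambda>v. if v \<in> verts G then v else undefined),
             mF = (\<lambda>f. if f \<in> flags G then f else undefined),
             mI = (\<lambda>f. undefined) \<rparr>"

definition gcomp :: "('f,'v) graph \<Rightarrow> ('f,'v) graph \<Rightarrow> ('f,'v) graph \<Rightarrow>
                     ('f,'v) gmor \<Rightarrow> ('f,'v) gmor \<Rightarrow> ('f,'v) gmor" where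
  "gcomp G H K q p = \<lparr>
     mV = (\<lambda>v. if v \<in> verts G then mV q (mV p v) else undefined),
     mF = (\<lambda>f. if f \<in> flags K then mF p (mF q f) else undefined),
     mI = (\<lambda>f. if f \<in> flags G - mF p ` mF q ` flags K then
                 (if f \<in> mF p ` flags H then mF p (mI q (inv_into (flags H) (mF p) f))
                  else mI p f)
               else undefined) \<rparr>"

definition graph_iso :: "('f,'v) graph \<Rightarrow> ('f,'v) graph \<Rightarrow> ('f,'v) gmor \<Rightarrow> bool" where
  "graph_iso G H p \<longleftrightarrow> graph_morphism G H p \<and>
     bij_betw (mV p) (verts G) (verts H) \<and> bij_betw (mF p) (flags H) (flags G) \<and>
     (\<forall>f'\<in>flags H. mF p (gi H f') = gi G (mF p f'))"

text \<open>Contraction identifying flags s and t (paired by mI), up to the canonical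
  quotient/inclusion (i.e. up to composing with an isomorphism): mV identifies exactly
  bd s and bd t, mF is a bijection onto F - {s,t}, and the involution of the target
  is the restriction of the involution of the source.\<close>
definition contraction_at :: "('f,'v) graph \<Rightarrow> ('f,'v) graph \<Rightarrow> ('f,'v) gmor \<Rightarrow> 'f \<Rightarrow> 'f \<Rightarrow> bool" where
  "contraction_at G H p s t \<longleftrightarrow> graph_morphism G H p \<and>
     s \<in> flags G \<and> t \<in> flags G \<and> s \<noteq> t \<and>
     mF p ` flags H = flags G - {s,t} \<and> mI p s = t \<and>
     (\<forall>v\<in>verts G. \<forall>w\<in>verts G. mV p v = mV p w \<longleftrightarrow> v = w \<or> {v,w} = {bd G s, bd G t}) \<and>
     (\<forall>f'\<in>flags H. mF p (gi H f') = gi G (mF p f'))"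

definition edge_contraction :: "('f,'v) graph \<Rightarrow> ('f,'v) graph \<Rightarrow> ('f,'v) gmor \<Rightarrow> bool" where
  "edge_contraction G H p \<longleftrightarrow> (\<exists>s t. contraction_at G H p s t \<and> gi G s = t \<and> bd G s \<noteq> bd G t)"

definition virtual_edge_contraction :: "('f,'v) graph \<Rightarrow> ('f,'v) graph \<Rightarrow> ('f,'v) gmor \<Rightarrow> bool" where
  "virtual_edge_contraction X Y p \<longleftrightarrow> aggregate X \<and> aggregate Y \<and>
     (\<exists>s t. contraction_at X Y p s t \<and> bd X s \<noteq> bd X t)"

definition loop_contraction :: "('f,'v) graph \<Rightarrow> ('f,'v) graph \<Rightarrow> ('f,'v) gmor \<Rightarrow> bool" where
  "loop_contraction X Y p \<longleftrightarrow> aggregate X \<and> aggregate Y \<and>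
     (\<exists>s t. contraction_at X Y p s t \<and> bd X s = bd X t)"

definition agg_iso :: "('f,'v) graph \<Rightarrow> ('f,'v) graph \<Rightarrow> ('f,'v) gmor \<Rightarrow> bool" where
  "agg_iso X Y p \<longleftrightarrow> aggregate X \<and> aggregate Y \<and> graph_iso X Y p"

inductive generated ::
  "(('f,'v) graph \<Rightarrow> ('f,'v) graph \<Rightarrow> ('f,'v) gmor \<Rightarrow> bool) \<Rightarrow>
   ('f,'v) graph \<Rightarrow> ('f,'v) graph \<Rightarrow> ('f,'v) gmor \<Rightarrow> bool"
  for P where
  gen_base: "P G H p \<Longrightarrow> generated P G H p"
| gen_comp: "generated P G H p \<Longrightarrow> generated P H K q \<Longrightarrow> generated P G K (gcomp G H K q p)"

definition ctd_morphism :: "('f,'v) graph \<Rightarrow> ('f,'v) graph \<Rightarrow> ('f,'v) gmor \<Rightarrow> bool" where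
  "ctd_morphism = generated (\<lambda>X Y p. agg_iso X Y p \<or> virtual_edge_contraction X Y p \<or> loop_contraction X Y p)"

definition forest_morphism :: "('f,'v) graph \<Rightarrow> ('f,'v) graph \<Rightarrow> ('f,'v) gmor \<Rightarrow> bool" where
  "forest_morphism = generated (\<lambda>X Y p. agg_iso X Y p \<or> virtual_edge_contraction X Y p)"

definition spanning_forest_morphism :: "('f,'v) graph \<Rightarrow> ('f,'v) graph \<Rightarrow> ('f,'v) gmor \<Rightarrow> bool" where
  "spanning_forest_morphism = generated (\<lambda>G H p. graph_iso G H p \<or> edge_contraction G H p)"

definition comma_ob :: "'f set \<Rightarrow> 'v \<Rightarrow> ('f,'v) graph \<times> ('f,'v) gmor \<Rightarrow> bool" where
  "comma_ob S v0 A \<longleftrightarrow> aggregate (fst A) \<and> ctd_morphism (fst A) (star S v0) (snd A)"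

definition comma_hom :: "'f set \<Rightarrow> 'v \<Rightarrow> ('f,'v) graph \<times> ('f,'v) gmor \<Rightarrow>
     ('f,'v) graph \<times> ('f,'v) gmor \<Rightarrow> ('f,'v) gmor \<Rightarrow> bool" where
  "comma_hom S v0 A B psi \<longleftrightarrow> comma_ob S v0 A \<and> comma_ob S v0 B \<and>
     forest_morphism (fst A) (fst B) psi \<and>
     gcomp (fst A) (fst B) (star S v0) (snd B) psi = snd A"

definition comma_id :: "('f,'v) graph \<times> ('f,'v) gmor \<Rightarrow> ('f,'v) gmor" where
  "comma_id A = gid (fst A)"

definition comma_comp :: "('f,'v) graph \<times> ('f,'v) gmor \<Rightarrow> ('f,'v) graph \<times> ('f,'v) gmor \<Rightarrow>
     ('f,'v) graph \<times> ('f,'v) gmor \<Rightarrow> ('f,'v) gmor \<Rightarrow> ('f,'v) gmor \<Rightarrow> ('f,'v) gmor" where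
  "comma_comp A B C g f = gcomp (fst A) (fst B) (fst C) g f"

definition IS_ob :: "'f set \<Rightarrow> ('f,'v) graph \<Rightarrow> bool" where
  "IS_ob S G \<longleftrightarrow> connected_graph G \<and> outer_flags G = S"

definition IS_hom :: "'f set \<Rightarrow> ('f,'v) graph \<Rightarrow> ('f,'v) graph \<Rightarrow> ('f,'v) gmor \<Rightarrow> bool" where
  "IS_hom S G H p \<longleftrightarrow> IS_ob S G \<and> IS_ob S H \<and> graph_morphism G H p \<and>
     spanning_forest_morphism G H p \<and> (\<forall>s\<in>S. mF p s = s)"

definition equivalent_cats ::
  "('a \<Rightarrow> bool) \<Rightarrow> ('a \<Rightarrow> 'a \<Rightarrow> 'm \<Rightarrow> bool) \<Rightarrow> ('a \<Rightarrow> 'm) \<Rightarrow> ('a \<Rightarrow> 'a \<Rightarrow> 'a \<Rightarrow> 'm \<Rightarrow> 'm \<Rightarrow> 'm) \<Rightarrow>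
   ('b \<Rightarrow> bool) \<Rightarrow> ('b \<Rightarrow> 'b \<Rightarrow> 'n \<Rightarrow> bool) \<Rightarrow> ('b \<Rightarrow> 'n) \<Rightarrow> ('b \<Rightarrow> 'b \<Rightarrow> 'b \<Rightarrow> 'n \<Rightarrow> 'n \<Rightarrow> 'n) \<Rightarrow> bool"
  where
  "equivalent_cats ObC HomC IdC CmpC ObD HomD IdD CmpD \<longleftrightarrow>
   (\<exists>(Fo :: 'a \<Rightarrow> 'b) (Fm :: 'a \<Rightarrow> 'a \<Rightarrow> 'm \<Rightarrow> 'n).
      (\<forall>a. ObC a \<longrightarrow> ObD (Fo a)) \<and>
      (\<forall>a b f. ObC a \<longrightarrow> ObC b \<longrightarrow> HomC a b f \<longrightarrow> HomD (Fo a) (Fo b) (Fm a b f)) \<and>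
      (\<forall>a. ObC a \<longrightarrow> Fm a a (IdC a) = IdD (Fo a)) \<and>
      (\<forall>a b c f g. ObC a \<longrightarrow> ObC b \<longrightarrow> ObC c \<longrightarrow> HomC a b f \<longrightarrow> HomC b c g \<longrightarrow>
          Fm a c (CmpC a b c g f) = CmpD (Fo a) (Fo b) (Fo c) (Fm b c g) (Fm a b f)) \<and>
      (\<forall>a b f g. ObC a \<longrightarrow> ObC b \<longrightarrow> HomC a b f \<longrightarrow> HomC a b g \<longrightarrow>
          Fm a b f = Fm a b g \<longrightarrow> f = g) \<and>
      (\<forall>a b h. ObC a \<longrightarrow> ObC b \<longrightarrow> HomD (Fo a) (Fo b) h \<longrightarrow>
          (\<exists>f. HomC a b f \<and> Fm a b f = h)) \<and>
      (\<forall>d. ObD d \<longrightarrow> (\<exists>a u v. ObC a \<and> HomD (Fo a) d u \<and> HomD d (Fo a) v \<and>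
          CmpD (Fo a) d (Fo a) v u = IdD (Fo a) \<and> CmpD d (Fo a) d u v = IdD d)))"

end

theory Submission
  imports Defs
begin


lemma gcomp_simps:
  "mV (gcomp G H K q p) v = (if v \<in> verts G then mV q (mV p v) else undefined)"
  "mF (gcomp G H K q p) f = (if f \<in> flags K then mF p (mF q f) else undefined)"
  "mI (gcomp G H K q p) f = (if f \<in> flags G - mF p ` mF q ` flags K then
                 (if f \<in> mF p ` flags H then mF p (mI q (inv_into (flags H) (mF p) f))
                  else mI p f)
               else undefined)"
  by (simp_all add: gcomp_def)

lemma gcomp_mF_image: "mF q ` flags K \<subseteq> flags H \<Longrightarrow>
   mF (gcomp G H K q p) ` flags K = mF p ` mF q ` flags K"
  by (auto simp: gcomp_simps image_iff)

lemma gm_conj: "graph_morphism G H p \<Longrightarrow> wf_graph G \<and> wf_graph H \<and>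
     mV p ` verts G = verts H \<and>
     mF p ` flags H \<subseteq> flags G \<and> inj_on (mF p) (flags H) \<and>
     (\<forall>f\<in>flags G - mF p ` flags H.
         mI p f \<in> flags G - mF p ` flags H \<and> mI p (mI p f) = f \<and> mI p f \<noteq> f) \<and>
     (\<forall>f'\<in>flags H. mV p (bd G (mF p f')) = bd H f') \<and>
     (\<forall>f\<in>flags G - mF p ` flags H. mV p (bd G f) = mV p (bd G (mI p f))) \<and>
     (\<forall>f\<in>flags G - mF p ` flags H.
         (gi G f \<noteq> f \<and> mI p f = gi G f) \<or> (gi G f = f \<and> gi G (mI p f) = mI p f)) \<and>
     (\<forall>f'\<in>flags H. gi G (mF p f') \<noteq> mF p f' \<longrightarrow> gi G (mF p f') = mF p (gi H f')) \<and>
     (\<forall>v. v \<notin> verts G \<longrightarrow> mV p v = undefined) \<and>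
     (\<forall>f'. f' \<notin> flags H \<longrightarrow> mF p f' = undefined) \<and>
     (\<forall>f. f \<notin> flags G - mF p ` flags H \<longrightarrow> mI p f = undefined)"
  unfolding graph_morphism_def by assumption

lemmas gm_wfG = gm_conj[THEN conjunct1]
lemmas gm_wfH = gm_conj[THEN conjunct2, THEN conjunct1]
lemmas gm_V = gm_conj[THEN conjunct2, THEN conjunct2, THEN conjunct1]
lemmas gm_Fim = gm_conj[THEN conjunct2, THEN conjunct2, THEN conjunct2, THEN conjunct1]
lemmas gm_inj = gm_conj[THEN conjunct2, THEN conjunct2, THEN conjunct2, THEN conjunct2, THEN conjunct1]
lemmas gm_I = gm_conj[THEN conjunct2, THEN conjunct2, THEN conjunct2, THEN conjunct2, THEN conjunct2, THEN conjunct1, THEN bspec]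
lemmas gm_bd = gm_conj[THEN conjunct2, THEN conjunct2, THEN conjunct2, THEN conjunct2, THEN conjunct2, THEN conjunct2, THEN conjunct1, THEN bspec]
lemmas gm_IV = gm_conj[THEN conjunct2, THEN conjunct2, THEN conjunct2, THEN conjunct2, THEN conjunct2, THEN conjunct2, THEN conjunct2, THEN conjunct1, THEN bspec]
lemmas gm_E = gm_conj[THEN conjunct2, THEN conjunct2, THEN conjunct2, THEN conjunct2, THEN conjunct2, THEN conjunct2, THEN conjunct2, THEN conjunct2, THEN conjunct1, THEN bspec]
lemmas gm_C = gm_conj[THEN conjunct2, THEN conjunct2, THEN conjunct2, THEN conjunct2, THEN conjunct2, THEN conjunct2, THEN conjunct2, THEN conjunct2, THEN conjunct2, THEN conjunct1, THEN bspec, THEN mp]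
lemmas gm_uV = gm_conj[THEN conjunct2, THEN conjunct2, THEN conjunct2, THEN conjunct2, THEN conjunct2, THEN conjunct2, THEN conjunct2, THEN conjunct2, THEN conjunct2, THEN conjunct2, THEN conjunct1, THEN spec, THEN mp]
lemmas gm_uF = gm_conj[THEN conjunct2, THEN conjunct2, THEN conjunct2, THEN conjunct2, THEN conjunct2, THEN conjunct2, THEN conjunct2, THEN conjunct2, THEN conjunct2, THEN conjunct2, THEN conjunct2, THEN conjunct1, THEN spec, THEN mp]
lemmas gm_uI = gm_conj[THEN conjunct2, THEN conjunct2, THEN conjunct2, THEN conjunct2, THEN conjunct2, THEN conjunct2, THEN conjunct2, THEN conjunct2, THEN conjunct2, THEN conjunct2, THEN conjunct2, THEN conjunct2, THEN spec, THEN mp]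

lemma wfD:
  assumes "wf_graph G"
  shows wf_finF: "finite (flags G)" and wf_finV: "finite (verts G)"
   and wf_bd: "\<And>f. f\<in>flags G \<Longrightarrow> bd G f \<in> verts G"
   and wf_gi: "\<And>f. f\<in>flags G \<Longrightarrow> gi G f \<in> flags G"
   and wf_gi2: "\<And>f. f\<in>flags G \<Longrightarrow> gi G (gi G f) = f"
   and wf_ubd: "\<And>f. f \<notin> flags G \<Longrightarrow> bd G f = undefined"
   and wf_ugi: "\<And>f. f \<notin> flags G \<Longrightarrow> gi G f = undefined"
  using assms unfolding wf_graph_def by auto

lemma gm_comp:
  assumes p: "graph_morphism G H p" and q: "graph_morphism H K q"
  shows "graph_morphism G K (gcomp G H K q p)"
proof -
  let ?r = "gcomp G H K q p"
  have wG: "wf_graph G" and wH: "wf_graph H" and wK: "wf_graph K" using gm_wfG[OF p] gm_wfG[OF q] gm_wfH[OF q] by auto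
  have pim: "mF p ` flags H \<subseteq> flags G" and pinj: "inj_on (mF p) (flags H)" using gm_Fim[OF p] gm_inj[OF p] by auto
  have qim: "mF q ` flags K \<subseteq> flags H" and qinj: "inj_on (mF q) (flags K)" using gm_Fim[OF q] gm_inj[OF q] by auto
  have qimx: "\<And>x. x \<in> flags K \<Longrightarrow> mF q x \<in> flags H" using qim by blast
  have pimx: "\<And>x. x \<in> flags H \<Longrightarrow> mF p x \<in> flags G" using pim by blast
  have rim: "mF ?r ` flags K = mF p ` mF q ` flags K" using gcomp_mF_image[OF qim] .
  have invp: "\<And>h. h \<in> flags H \<Longrightarrow> inv_into (flags H) (mF p) (mF p h) = h"
    using pinj by (simp add: inv_into_f_f)
  note pI = gm_I[OF p] and qI = gm_I[OF q] and pbd = gm_bd[OF p] and qbd = gm_bd[OF q]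
   and pV = gm_IV[OF p] and qV = gm_IV[OF q] and pE = gm_E[OF p] and qE = gm_E[OF q]
   and pC = gm_C[OF p] and qC = gm_C[OF q]
  have wGd: "\<And>f. f\<in>flags G \<Longrightarrow> bd G f \<in> verts G \<and> gi G f \<in> flags G \<and> gi G (gi G f) = f"
    using wfD[OF wG] by auto
  have wHd: "\<And>f. f\<in>flags H \<Longrightarrow> bd H f \<in> verts H \<and> gi H f \<in> flags H \<and> gi H (gi H f) = f"
    using wfD[OF wH] by auto
  have rI1: "\<And>h. h \<in> flags H - mF q ` flags K \<Longrightarrow> mI ?r (mF p h) = mF p (mI q h)"
  proof -
    fix h assume h: "h \<in> flags H - mF q ` flags K"
    have "mF p h \<notin> mF p ` mF q ` flags K" using h pinj qimx by (auto simp: inj_on_eq_iff)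
    thus "mI ?r (mF p h) = mF p (mI q h)" using h pimx invp by (auto simp: gcomp_simps)
  qed
  have rI2: "\<And>f. f \<in> flags G - mF p ` flags H \<Longrightarrow> mI ?r f = mI p f"
    using qimx by (auto simp: gcomp_simps)
  have dom: "flags G - mF ?r ` flags K = (flags G - mF p ` flags H) \<union> mF p ` (flags H - mF q ` flags K)"
  proof (intro equalityI subsetI)
    fix f assume "f \<in> flags G - mF ?r ` flags K"
    thus "f \<in> (flags G - mF p ` flags H) \<union> mF p ` (flags H - mF q ` flags K)"
      unfolding rim by blast
  next
    fix f assume "f \<in> (flags G - mF p ` flags H) \<union> mF p ` (flags H - mF q ` flags K)"
    thus "f \<in> flags G - mF ?r ` flags K" unfolding rim using pim qim pinj
      by (auto simp: inj_on_eq_iff)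
  qed
  show ?thesis
    unfolding graph_morphism_def
  proof (intro conjI)
    show "wf_graph G" "wf_graph K" by fact+
    show "mV ?r ` verts G = verts K"
    proof -
      have "mV ?r ` verts G = mV q ` mV p ` verts G" by (force simp: gcomp_simps image_iff)
      thus ?thesis using gm_V[OF p] gm_V[OF q] by simp
    qed
    show "mF ?r ` flags K \<subseteq> flags G" unfolding rim using pim qim by blast
    show "inj_on (mF ?r) (flags K)"
    proof (rule inj_onI)
      fix x y assume x: "x \<in> flags K" and y: "y \<in> flags K" and e: "mF ?r x = mF ?r y"
      hence "mF p (mF q x) = mF p (mF q y)" by (simp add: gcomp_simps)
      hence "mF q x = mF q y" using pinj qimx x y by (auto simp: inj_on_eq_iff)
      thus "x = y" using qinj x y by (auto simp: inj_on_eq_iff)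
    qed
    show "\<forall>f\<in>flags G - mF ?r ` flags K.
         mI ?r f \<in> flags G - mF ?r ` flags K \<and> mI ?r (mI ?r f) = f \<and> mI ?r f \<noteq> f"
      unfolding dom
    proof
      fix f assume "f \<in> (flags G - mF p ` flags H) \<union> mF p ` (flags H - mF q ` flags K)"
      then show "mI ?r f \<in> (flags G - mF p ` flags H) \<union> mF p ` (flags H - mF q ` flags K) \<and> mI ?r (mI ?r f) = f \<and> mI ?r f \<noteq> f"
      proof
        assume f: "f \<in> flags G - mF p ` flags H"
        thus ?thesis using rI2 pI by auto
      next
        assume "f \<in> mF p ` (flags H - mF q ` flags K)"
        then obtain h where h: "h \<in> flags H - mF q ` flags K" and fh: "f = mF p h" by auto
        have "mI q h \<in> flags H - mF q ` flags K" "mI q (mI q h) = h" "mI q h \<noteq> h" using qI h by auto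
        thus ?thesis using rI1 h fh pinj by (auto simp: inj_on_eq_iff)
      qed
    qed
    show "\<forall>f'\<in>flags K. mV ?r (bd G (mF ?r f')) = bd K f'"
    proof
      fix f' assume f': "f' \<in> flags K"
      show "mV ?r (bd G (mF ?r f')) = bd K f'"
        using pbd[OF qimx[OF f']] qbd[OF f'] wfD(3)[OF wG pimx[OF qimx[OF f']]] f' by (simp add: gcomp_simps)
    qed
    show "\<forall>f\<in>flags G - mF ?r ` flags K. mV ?r (bd G f) = mV ?r (bd G (mI ?r f))"
      unfolding dom
    proof
      fix f assume "f \<in> (flags G - mF p ` flags H) \<union> mF p ` (flags H - mF q ` flags K)"
      then show "mV ?r (bd G f) = mV ?r (bd G (mI ?r f))"
      proof
        assume f: "f \<in> flags G - mF p ` flags H"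
        have "mI p f \<in> flags G" using pI[OF f] by blast
        hence "bd G f \<in> verts G" "bd G (mI p f) \<in> verts G" using f wfD(3)[OF wG] by auto
        thus ?thesis using rI2[OF f] pV[OF f] by (simp add: gcomp_simps)
      next
        assume "f \<in> mF p ` (flags H - mF q ` flags K)"
        then obtain h where h: "h \<in> flags H - mF q ` flags K" and fh: "f = mF p h" by auto
        have m: "mI q h \<in> flags H" using qI h by auto
        have hH: "h \<in> flags H" using h by blast
        have "mV ?r (bd G f) = mV q (bd H h)" using fh pbd[OF hH] wfD(3)[OF wG pimx[OF hH]] by (simp add: gcomp_simps)
        also have "\<dots> = mV q (bd H (mI q h))" using qV h by auto
        also have "\<dots> = mV ?r (bd G (mI ?r f))" using rI1[OF h] fh pbd[OF m] wfD(3)[OF wG pimx[OF m]] by (simp add: gcomp_simps)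
        finally show ?thesis .
      qed
    qed
    show "\<forall>f\<in>flags G - mF ?r ` flags K.
         (gi G f \<noteq> f \<and> mI ?r f = gi G f) \<or> (gi G f = f \<and> gi G (mI ?r f) = mI ?r f)"
      unfolding dom
    proof
      fix f assume "f \<in> (flags G - mF p ` flags H) \<union> mF p ` (flags H - mF q ` flags K)"
      then show "(gi G f \<noteq> f \<and> mI ?r f = gi G f) \<or> (gi G f = f \<and> gi G (mI ?r f) = mI ?r f)"
      proof
        assume f: "f \<in> flags G - mF p ` flags H"
        thus ?thesis using rI2 pE by auto
      next
        assume "f \<in> mF p ` (flags H - mF q ` flags K)"
        then obtain h where h: "h \<in> flags H - mF q ` flags K" and fh: "f = mF p h" by auto
        have hH: "h \<in> flags H" using h by auto
        have m: "mI q h \<in> flags H" using qI h by auto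
        have rf: "mI ?r f = mF p (mI q h)" using rI1[OF h] fh by simp
        from qE[OF h] show ?thesis
        proof
          assume a: "gi H h \<noteq> h \<and> mI q h = gi H h"
          show ?thesis
          proof (cases "gi G (mF p h) = mF p h")
            case False
            thus ?thesis using pC[OF hH] a rf fh by metis
          next
            case True
            have "gi G (mF p (gi H h)) = mF p (gi H h)"
            proof (rule ccontr)
              assume c: "gi G (mF p (gi H h)) \<noteq> mF p (gi H h)"
              have giH: "gi H h \<in> flags H" "gi H (gi H h) = h" using wfD(4,5)[OF wH hH] by auto
              hence "gi G (mF p (gi H h)) = mF p h" using pC[OF giH(1) c] by simp
              hence "gi G (gi G (mF p (gi H h))) = mF p h" using True by simp
              moreover have "gi G (gi G (mF p (gi H h))) = mF p (gi H h)" using wfD(5)[OF wG pimx[OF giH(1)]] by simp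
              ultimately have "mF p h = mF p (gi H h)" by simp
              thus False using pinj hH giH a by (auto simp: inj_on_eq_iff)
            qed
            thus ?thesis using True rf fh a by auto
          qed
        next
          assume a: "gi H h = h \<and> gi H (mI q h) = mI q h"
          have 1: "gi G (mF p h) = mF p h" using pC[OF hH] a by metis
          have 2: "gi G (mF p (mI q h)) = mF p (mI q h)" using pC[OF m] a by metis
          show ?thesis using 1 2 rf fh by auto
        qed
      qed
    qed
    show "\<forall>f'\<in>flags K. gi G (mF ?r f') \<noteq> mF ?r f' \<longrightarrow> gi G (mF ?r f') = mF ?r (gi K f')"
    proof (intro ballI impI)
      fix f' assume f': "f' \<in> flags K" and c: "gi G (mF ?r f') \<noteq> mF ?r f'"
      have qf: "mF q f' \<in> flags H" using qimx f' by auto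
      have c1: "gi G (mF p (mF q f')) \<noteq> mF p (mF q f')" using c f' by (simp add: gcomp_simps)
      hence e1: "gi G (mF p (mF q f')) = mF p (gi H (mF q f'))" using pC[OF qf] by blast
      have "gi H (mF q f') \<noteq> mF q f'" using c1 e1 by auto
      hence "gi H (mF q f') = mF q (gi K f')" using qC[OF f'] by blast
      moreover have "gi K f' \<in> flags K" using wK f' by (simp add: wf_graph_def)
      ultimately show "gi G (mF ?r f') = mF ?r (gi K f')" using e1 f' by (simp add: gcomp_simps)
    qed
    show "\<forall>v. v \<notin> verts G \<longrightarrow> mV ?r v = undefined" by (simp add: gcomp_simps)
    show "\<forall>f'. f' \<notin> flags K \<longrightarrow> mF ?r f' = undefined" by (simp add: gcomp_simps)
    show "\<forall>f. f \<notin> flags G - mF ?r ` flags K \<longrightarrow> mI ?r f = undefined"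
      using rim by (auto simp: gcomp_simps)
  qed
qed


lemma gm_Vin: "graph_morphism G H p \<Longrightarrow> v \<in> verts G \<Longrightarrow> mV p v \<in> verts H"
  using gm_V by blast

lemma gm_Fin: "graph_morphism G H p \<Longrightarrow> f \<in> flags H \<Longrightarrow> mF p f \<in> flags G"
  using gm_Fim by blast

lemma gid_simps:
  "mV (gid G) v = (if v \<in> verts G then v else undefined)"
  "mF (gid G) f = (if f \<in> flags G then f else undefined)"
  "mI (gid G) f = undefined"
  by (simp_all add: gid_def)

lemma gcomp_mI_in:
  assumes "f \<in> flags G - mF p ` mF q ` flags K" "f = mF p h" "h \<in> flags H" "inj_on (mF p) (flags H)"
  shows "mI (gcomp G H K q p) f = mF p (mI q h)"
proof -
  have "f \<in> mF p ` flags H" using assms by blast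
  moreover have "inv_into (flags H) (mF p) f = h" using assms by (simp add: inv_into_f_f)
  ultimately show ?thesis using assms(1) by (simp add: gcomp_def)
qed

lemma gcomp_mI_out:
  assumes "f \<in> flags G - mF p ` mF q ` flags K" "f \<notin> mF p ` flags H"
  shows "mI (gcomp G H K q p) f = mI p f"
  using assms by (simp add: gcomp_def)

lemma gcomp_mI_undef:
  assumes "f \<notin> flags G - mF p ` mF q ` flags K"
  shows "mI (gcomp G H K q p) f = undefined"
  unfolding gcomp_def by (simp only: gmor.select_convs if_not_P[OF assms])

lemma gcomp_mF_in: "f \<in> flags K \<Longrightarrow> mF (gcomp G H K q p) f = mF p (mF q f)"
  by (simp add: gcomp_def)

lemma gcomp_mV_in: "v \<in> verts G \<Longrightarrow> mV (gcomp G H K q p) v = mV q (mV p v)"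
  by (simp add: gcomp_def)

lemma gid_inj: "inj_on (mF (gid G)) (flags G)" by (auto simp: inj_on_def gid_simps)

lemma gid_img: "A \<subseteq> flags G \<Longrightarrow> mF (gid G) ` A = A" by (force simp: gid_simps)

lemma gcomp_id_left:
  assumes p: "graph_morphism G H p"
  shows "gcomp G H H (gid H) p = p"
proof (rule gmor.equality)
  show "mV (gcomp G H H (gid H) p) = mV p"
    using gm_Vin[OF p] gm_uV[OF p] by (auto simp: gcomp_simps gid_simps)
  show "mF (gcomp G H H (gid H) p) = mF p"
    using gm_uF[OF p] by (auto simp: gcomp_simps gid_simps)
  have im: "mF p ` mF (gid H) ` flags H = mF p ` flags H" by (simp add: gid_img)
  show "mI (gcomp G H H (gid H) p) = mI p"
  proof
    fix f
    show "mI (gcomp G H H (gid H) p) f = mI p f"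
    proof (cases "f \<in> flags G - mF p ` flags H")
      case True
      thus ?thesis using gcomp_mI_out[of f G p "gid H" H H] im by simp
    next
      case False
      thus ?thesis using gcomp_mI_undef[of f G p "gid H" H H] im gm_uI[OF p] by simp
    qed
  qed
qed simp

lemma gcomp_id_right:
  assumes p: "graph_morphism G H p"
  shows "gcomp G G H p (gid G) = p"
proof (rule gmor.equality)
  show "mV (gcomp G G H p (gid G)) = mV p"
    using gm_uV[OF p] by (auto simp: gcomp_simps gid_simps)
  show "mF (gcomp G G H p (gid G)) = mF p"
    using gm_uF[OF p] gm_Fin[OF p] by (auto simp: gcomp_simps gid_simps)
  have im: "mF (gid G) ` mF p ` flags H = mF p ` flags H" using gm_Fim[OF p] by (simp add: gid_img)
  show "mI (gcomp G G H p (gid G)) = mI p"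
  proof
    fix f
    show "mI (gcomp G G H p (gid G)) f = mI p f"
    proof (cases "f \<in> flags G - mF p ` flags H")
      case True
      hence "mI p f \<in> flags G" using gm_I[OF p] by blast
      moreover have "mI (gcomp G G H p (gid G)) f = mF (gid G) (mI p f)"
      proof -
        have dom: "f \<in> flags G - mF (gid G) ` mF p ` flags H" using True im by simp
        have "f = mF (gid G) f" using True by (simp add: gid_simps)
        from gcomp_mI_in[OF dom this _ gid_inj] True show ?thesis by simp
      qed
      ultimately show ?thesis by (simp add: gid_simps)
    next
      case False
      thus ?thesis using gcomp_mI_undef[of f G "gid G" p H G] im gm_uI[OF p] by simp
    qed
  qed
qed simp

lemma gcomp_assoc:
  assumes p: "graph_morphism G H p" and q: "graph_morphism H K q" and r: "graph_morphism K L r"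
  shows "gcomp G H L (gcomp H K L r q) p = gcomp G K L r (gcomp G H K q p)"
proof (rule gmor.equality)
  show "mV (gcomp G H L (gcomp H K L r q) p) = mV (gcomp G K L r (gcomp G H K q p))"
    using gm_Vin[OF p] by (auto simp: gcomp_simps)
  show "mF (gcomp G H L (gcomp H K L r q) p) = mF (gcomp G K L r (gcomp G H K q p))"
    using gm_Fin[OF r] by (auto simp: gcomp_simps)
  have rim: "mF r ` flags L \<subseteq> flags K" and qim: "mF q ` flags K \<subseteq> flags H" and pim: "mF p ` flags H \<subseteq> flags G"
    using gm_Fim p q r by blast+
  have pinj: "inj_on (mF p) (flags H)" and qinj: "inj_on (mF q) (flags K)" using gm_inj p q by blast+
  have i1: "mF (gcomp H K L r q) ` flags L = mF q ` mF r ` flags L" using gcomp_mF_image[OF rim] .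
  have i2: "mF (gcomp G H K q p) ` mF r ` flags L = mF p ` mF q ` mF r ` flags L"
    using rim by (force simp: gcomp_simps image_iff)
  have i3: "mF (gcomp G H K q p) ` flags K = mF p ` mF q ` flags K" using gcomp_mF_image[OF qim] .
  have qp: "graph_morphism G K (gcomp G H K q p)" using gm_comp[OF p q] .
  have qpinj: "inj_on (mF (gcomp G H K q p)) (flags K)" using gm_inj[OF qp] .
  show "mI (gcomp G H L (gcomp H K L r q) p) = mI (gcomp G K L r (gcomp G H K q p))"
  proof
    fix f
    show "mI (gcomp G H L (gcomp H K L r q) p) f = mI (gcomp G K L r (gcomp G H K q p)) f"
    proof (cases "f \<in> flags G - mF p ` mF q ` mF r ` flags L")
      case False
      thus ?thesis using gcomp_mI_undef[of f G p "gcomp H K L r q" L] gcomp_mI_undef[of f G "gcomp G H K q p" r L]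
        i1 i2 by simp
    next
      case T: True
      have TL: "f \<in> flags G - mF p ` mF (gcomp H K L r q) ` flags L" using T i1 by simp
      have TR: "f \<in> flags G - mF (gcomp G H K q p) ` mF r ` flags L" using T i2 by simp
      show ?thesis
      proof (cases "f \<in> mF p ` flags H")
        case False
        hence F2: "f \<notin> mF (gcomp G H K q p) ` flags K" unfolding i3 using qim by blast
        have F3: "f \<in> flags G - mF p ` mF q ` flags K" using False T qim by blast
        show ?thesis using gcomp_mI_out[OF TL False] gcomp_mI_out[OF TR F2]
          gcomp_mI_out[of f G p q K H, OF F3 False] by simp
      next
        case True
        then obtain h where h: "h \<in> flags H" and fh: "f = mF p h" by blast
        have L1: "mI (gcomp G H L (gcomp H K L r q) p) f = mF p (mI (gcomp H K L r q) h)"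
          using gcomp_mI_in[OF TL fh h pinj] .
        have hn: "h \<in> flags H - mF q ` mF r ` flags L" using T fh h by blast
        show ?thesis
        proof (cases "h \<in> mF q ` flags K")
          case True
          then obtain k where k: "k \<in> flags K" and hk: "h = mF q k" by blast
          have L2: "mI (gcomp H K L r q) h = mF q (mI r k)" using gcomp_mI_in[OF hn hk k qinj] .
          have fk: "f = mF (gcomp G H K q p) k" using fh hk k by (simp add: gcomp_simps)
          have R1: "mI (gcomp G K L r (gcomp G H K q p)) f = mF (gcomp G H K q p) (mI r k)"
            using gcomp_mI_in[OF TR fk k qpinj] .
          have "mI r k \<in> flags K" using gm_I[OF r] k hk hn by blast
          thus ?thesis using L1 L2 R1 by (simp add: gcomp_mF_in)
        next
          case False
          have L2: "mI (gcomp H K L r q) h = mI q h" using gcomp_mI_out[OF hn False] .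
          have F2: "f \<notin> mF (gcomp G H K q p) ` flags K" unfolding i3 using False fh pinj h qim by (auto simp: inj_on_eq_iff)
          have F3: "f \<in> flags G - mF p ` mF q ` flags K" using F2[unfolded i3] T by blast
          have R1: "mI (gcomp G K L r (gcomp G H K q p)) f = mI (gcomp G H K q p) f"
            using gcomp_mI_out[OF TR F2] .
          have R2: "mI (gcomp G H K q p) f = mF p (mI q h)" using gcomp_mI_in[OF F3 fh h pinj] .
          show ?thesis using L1 L2 R1 R2 by simp
        qed
      qed
    qed
  qed
qed simp



lemma gen_mono:
  assumes "generated P G H p" "\<And>G H p. P G H p \<Longrightarrow> Q G H p"
  shows "generated Q G H p"
  using assms(1)
proof (induction rule: generated.induct)
  case (gen_base G H p) thus ?case using assms(2) by (blast intro: generated.gen_base)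
next
  case (gen_comp G H p K q) thus ?case by (blast intro: generated.gen_comp)
qed

lemma gen_gm:
  assumes "generated P G H p" "\<And>G H p. P G H p \<Longrightarrow> graph_morphism G H p"
  shows "graph_morphism G H p"
  using assms(1)
proof (induction rule: generated.induct)
  case (gen_base G H p) thus ?case using assms(2) by blast
next
  case (gen_comp G H p K q) thus ?case by (blast intro: gm_comp)
qed

lemma gen_prop:
  assumes "generated P G H p" "\<And>G H p. P G H p \<Longrightarrow> Q G \<and> Q H"
  shows "Q G \<and> Q H"
  using assms(1)
proof (induction rule: generated.induct)
  case (gen_base G H p) thus ?case using assms(2) by blast
next
  case (gen_comp G H p K q) thus ?case by blast
qed

lemma iso_gm: "graph_iso G H p \<Longrightarrow> graph_morphism G H p" by (simp add: graph_iso_def)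
lemma contr_gm: "contraction_at G H p s t \<Longrightarrow> graph_morphism G H p" by (simp add: contraction_at_def)

lemma ctd_gm: "ctd_morphism G H p \<Longrightarrow> graph_morphism G H p"
  unfolding ctd_morphism_def
  by (erule gen_gm) (auto simp: agg_iso_def virtual_edge_contraction_def loop_contraction_def
      intro: iso_gm contr_gm)

lemma forest_gm: "forest_morphism G H p \<Longrightarrow> graph_morphism G H p"
  unfolding forest_morphism_def
  by (erule gen_gm) (auto simp: agg_iso_def virtual_edge_contraction_def intro: iso_gm contr_gm)

lemma sf_gm: "spanning_forest_morphism G H p \<Longrightarrow> graph_morphism G H p"
  unfolding spanning_forest_morphism_def
  by (erule gen_gm) (auto simp: edge_contraction_def intro: iso_gm contr_gm)

lemma forest_ctd: "forest_morphism G H p \<Longrightarrow> ctd_morphism G H p"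
  unfolding forest_morphism_def ctd_morphism_def by (erule gen_mono) blast

lemma ctd_agg: "ctd_morphism G H p \<Longrightarrow> aggregate G \<and> aggregate H"
  unfolding ctd_morphism_def
  by (erule gen_prop) (auto simp: agg_iso_def virtual_edge_contraction_def loop_contraction_def)

lemma forest_agg: "forest_morphism G H p \<Longrightarrow> aggregate G \<and> aggregate H"
  using forest_ctd ctd_agg by blast

lemma ctd_comp: "ctd_morphism G H p \<Longrightarrow> ctd_morphism H K q \<Longrightarrow> ctd_morphism G K (gcomp G H K q p)"
  unfolding ctd_morphism_def by (rule generated.gen_comp)

lemma sf_comp: "spanning_forest_morphism G H p \<Longrightarrow> spanning_forest_morphism H K q \<Longrightarrow>
   spanning_forest_morphism G K (gcomp G H K q p)"
  unfolding spanning_forest_morphism_def by (rule generated.gen_comp)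

lemma sf_iso: "graph_iso G H p \<Longrightarrow> spanning_forest_morphism G H p"
  unfolding spanning_forest_morphism_def by (rule generated.gen_base) simp

lemma gcomp_cong:
  assumes "verts G' = verts G" "flags G' = flags G" "flags H' = flags H" "flags K' = flags K"
  shows "gcomp G' H' K' = gcomp G H K"
  using assms by (simp add: gcomp_def fun_eq_iff)

lemma star_simps: "flags (star S v0) = S" "verts (star S v0) = {v0}"
  "bd (star S v0) f = (if f \<in> S then v0 else undefined)"
  "gi (star S v0) f = (if f \<in> S then f else undefined)"
  by (simp_all add: star_def)

lemma aggD: "aggregate X \<Longrightarrow> wf_graph X" "aggregate X \<Longrightarrow> f \<in> flags X \<Longrightarrow> gi X f = f"
  by (simp_all add: aggregate_def)

definition gr :: "'f set \<Rightarrow> ('f,'v) graph \<Rightarrow> ('f,'v) gmor \<Rightarrow> ('f,'v) graph" where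
  "gr S X \<phi> = X\<lparr>gi := (\<lambda>f. if f \<in> flags X then (if f \<in> mF \<phi> ` S then f else mI \<phi> f) else undefined)\<rparr>"

lemma gr_simps: "flags (gr S X \<phi>) = flags X" "verts (gr S X \<phi>) = verts X" "bd (gr S X \<phi>) = bd X"
  "gi (gr S X \<phi>) f = (if f \<in> flags X then (if f \<in> mF \<phi> ` S then f else mI \<phi> f) else undefined)"
  by (simp_all add: gr_def)

lemma gr_wf:
  assumes X: "aggregate X" and ph: "graph_morphism X (star S v0) \<phi>"
  shows "wf_graph (gr S X \<phi>)"
proof -
  have wX: "wf_graph X" using aggD(1)[OF X] .
  have I: "\<And>f. f \<in> flags X - mF \<phi> ` S \<Longrightarrow> mI \<phi> f \<in> flags X - mF \<phi> ` S \<and> mI \<phi> (mI \<phi> f) = f"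
    using gm_I[OF ph] unfolding star_simps by blast
  have im: "mF \<phi> ` S \<subseteq> flags X" using gm_Fim[OF ph] unfolding star_simps .
  show ?thesis unfolding wf_graph_def gr_simps
  proof (intro conjI ballI allI impI)
    show "finite (flags X)" "finite (verts X)" using wfD[OF wX] by auto
    fix f
    { assume f: "f \<in> flags X"
      show "bd X f \<in> verts X" using wfD(3)[OF wX f] .
      show "(if f \<in> flags X then if f \<in> mF \<phi> ` S then f else mI \<phi> f else undefined) \<in> flags X"
        using f I by auto
      show "(if (if f \<in> flags X then if f \<in> mF \<phi> ` S then f else mI \<phi> f else undefined) \<in> flags X
         then if (if f \<in> flags X then if f \<in> mF \<phi> ` S then f else mI \<phi> f else undefined) \<in> mF \<phi> ` S
              then (if f \<in> flags X then if f \<in> mF \<phi> ` S then f else mI \<phi> f else undefined)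
              else mI \<phi> (if f \<in> flags X then if f \<in> mF \<phi> ` S then f else mI \<phi> f else undefined)
         else undefined) = f"
      proof (cases "f \<in> mF \<phi> ` S")
        case True thus ?thesis using f by simp
      next
        case False
        hence "mI \<phi> f \<in> flags X - mF \<phi> ` S" "mI \<phi> (mI \<phi> f) = f" using I f by auto
        thus ?thesis using f False by simp
      qed }
    { assume "f \<notin> flags X"
      thus "bd X f = undefined" using wfD(6)[OF wX] by blast
      show "(if f \<in> flags X then if f \<in> mF \<phi> ` S then f else mI \<phi> f else undefined) = undefined"
        using \<open>f \<notin> flags X\<close> by simp }
  qed
qed


lemma gm_change:
  assumes p: "graph_morphism G H p"
  and eG: "flags G' = flags G" "verts G' = verts G" "bd G' = bd G"
  and eH: "flags H' = flags H" "verts H' = verts H" "bd H' = bd H"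
  and wG': "wf_graph G'" and wH': "wf_graph H'"
  and E: "\<forall>f\<in>flags G - mF p ` flags H.
         (gi G' f \<noteq> f \<and> mI p f = gi G' f) \<or> (gi G' f = f \<and> gi G' (mI p f) = mI p f)"
  and C: "\<forall>f'\<in>flags H. gi G' (mF p f') \<noteq> mF p f' \<longrightarrow> gi G' (mF p f') = mF p (gi H' f')"
  shows "graph_morphism G' H' p"
  using gm_conj[OF p] wG' wH' E C unfolding graph_morphism_def eG eH
  by (elim conjE) (intro conjI; assumption)

lemma gr_lift:
  assumes X: "aggregate X" and Y: "aggregate Y" and p: "graph_morphism X Y p"
  and ph': "graph_morphism Y (star S v0) \<phi>'" and phd: "\<phi> = gcomp X Y (star S v0) \<phi>' p"
  shows "graph_morphism (gr S X \<phi>) (gr S Y \<phi>') p"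
    and "\<forall>f'\<in>flags Y. mF p (gi (gr S Y \<phi>') f') = gi (gr S X \<phi>) (mF p f')"
    and "\<And>f. f \<in> flags X - mF p ` flags Y \<Longrightarrow> gi (gr S X \<phi>) f = mI p f"
proof -
  have ph: "graph_morphism X (star S v0) \<phi>" unfolding phd by (rule gm_comp[OF p ph'])
  have wX: "wf_graph (gr S X \<phi>)" by (rule gr_wf[OF X ph])
  have wY: "wf_graph (gr S Y \<phi>')" by (rule gr_wf[OF Y ph'])
  have im': "mF \<phi>' ` S \<subseteq> flags Y" using gm_Fim[OF ph'] unfolding star_simps .
  have pim: "mF p ` flags Y \<subseteq> flags X" using gm_Fim[OF p] .
  have pinj: "inj_on (mF p) (flags Y)" using gm_inj[OF p] .
  have im: "mF \<phi> ` S = mF p ` mF \<phi>' ` S"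
  proof -
    have im0: "mF \<phi>' ` flags (star S v0) \<subseteq> flags Y" using gm_Fim[OF ph'] .
    show ?thesis unfolding phd using gcomp_mF_image[OF im0, of X p] by (simp add: star_simps)
  qed
  have gi_out: "\<And>f. f \<in> flags X - mF p ` flags Y \<Longrightarrow> gi (gr S X \<phi>) f = mI p f"
  proof -
    fix f assume f: "f \<in> flags X - mF p ` flags Y"
    have n: "f \<notin> mF \<phi> ` S" unfolding im using f im' by blast
    have d: "f \<in> flags X - mF p ` mF \<phi>' ` flags (star S v0)" using f im' by (auto simp: star_simps)
    have "mI \<phi> f = mI p f" unfolding phd using gcomp_mI_out[OF d] f by blast
    thus "gi (gr S X \<phi>) f = mI p f" using f n by (simp add: gr_simps)
  qed
  have gi_in: "\<And>f'. f' \<in> flags Y \<Longrightarrow> mF p (gi (gr S Y \<phi>') f') = gi (gr S X \<phi>) (mF p f')"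
  proof -
    fix f' assume f': "f' \<in> flags Y"
    have pf: "mF p f' \<in> flags X" using pim f' by blast
    show "mF p (gi (gr S Y \<phi>') f') = gi (gr S X \<phi>) (mF p f')"
    proof (cases "f' \<in> mF \<phi>' ` S")
      case True
      hence "mF p f' \<in> mF \<phi> ` S" unfolding im by blast
      thus ?thesis using True f' pf by (simp add: gr_simps)
    next
      case False
      hence n: "mF p f' \<notin> mF \<phi> ` S" unfolding im using pinj f' im' by (auto simp: inj_on_eq_iff)
      have d: "mF p f' \<in> flags X - mF p ` mF \<phi>' ` flags (star S v0)" using n pf im by (simp add: star_simps)
      have "mI \<phi> (mF p f') = mF p (mI \<phi>' f')" unfolding phd by (rule gcomp_mI_in[OF d refl f' pinj])
      thus ?thesis using False f' pf n by (simp add: gr_simps)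
    qed
  qed
  show "\<forall>f'\<in>flags Y. mF p (gi (gr S Y \<phi>') f') = gi (gr S X \<phi>) (mF p f')" using gi_in by blast
  show "\<And>f. f \<in> flags X - mF p ` flags Y \<Longrightarrow> gi (gr S X \<phi>) f = mI p f" by (rule gi_out)
  show "graph_morphism (gr S X \<phi>) (gr S Y \<phi>') p"
  proof (rule gm_change[OF p _ _ _ _ _ _ wX wY])
    show "\<forall>f\<in>flags X - mF p ` flags Y.
         (gi (gr S X \<phi>) f \<noteq> f \<and> mI p f = gi (gr S X \<phi>) f) \<or>
         (gi (gr S X \<phi>) f = f \<and> gi (gr S X \<phi>) (mI p f) = mI p f)"
    proof
      fix f assume f: "f \<in> flags X - mF p ` flags Y"
      have "mI p f \<noteq> f" using gm_I[OF p f] by blast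
      thus "(gi (gr S X \<phi>) f \<noteq> f \<and> mI p f = gi (gr S X \<phi>) f) \<or>
         (gi (gr S X \<phi>) f = f \<and> gi (gr S X \<phi>) (mI p f) = mI p f)" using gi_out[OF f] by simp
    qed
    show "\<forall>f'\<in>flags Y. gi (gr S X \<phi>) (mF p f') \<noteq> mF p f' \<longrightarrow>
         gi (gr S X \<phi>) (mF p f') = mF p (gi (gr S Y \<phi>') f')"
      using gi_in by simp
  qed (simp_all add: gr_simps)
qed



lemma forest_sf:
  assumes "forest_morphism X Y p"
  shows "\<And>\<phi>'. ctd_morphism Y (star S v0) \<phi>' \<Longrightarrow>
     spanning_forest_morphism (gr S X (gcomp X Y (star S v0) \<phi>' p)) (gr S Y \<phi>') p"
  using assms unfolding forest_morphism_def
proof (induction rule: generated.induct)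
  case (gen_base X Y p)
  have X: "aggregate X" and Y: "aggregate Y" and p: "graph_morphism X Y p"
    using gen_base.hyps by (auto simp: agg_iso_def virtual_edge_contraction_def dest: iso_gm contr_gm)
  have ph': "graph_morphism Y (star S v0) \<phi>'" using ctd_gm[OF gen_base.prems] .
  note L = gr_lift[OF X Y p ph' refl]
  from gen_base.hyps show ?case
  proof
    assume a: "agg_iso X Y p"
    have "graph_iso (gr S X (gcomp X Y (star S v0) \<phi>' p)) (gr S Y \<phi>') p"
      using L(1,2) a unfolding graph_iso_def gr_simps(1,2,3) agg_iso_def by simp
    thus ?case by (rule sf_iso)
  next
    assume "virtual_edge_contraction X Y p"
    then obtain s t where c: "contraction_at X Y p s t" and b: "bd X s \<noteq> bd X t"
      unfolding virtual_edge_contraction_def by blast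
    have cd: "s \<in> flags X" "t \<in> flags X" "s \<noteq> t" "mF p ` flags Y = flags X - {s,t}" "mI p s = t"
      using c unfolding contraction_at_def by blast+
    have sd: "s \<in> flags X - mF p ` flags Y" using cd by blast
    have "contraction_at (gr S X (gcomp X Y (star S v0) \<phi>' p)) (gr S Y \<phi>') p s t"
      using c L(1,2) unfolding contraction_at_def gr_simps by simp
    moreover have "gi (gr S X (gcomp X Y (star S v0) \<phi>' p)) s = t" using L(3)[OF sd] cd by simp
    ultimately have "edge_contraction (gr S X (gcomp X Y (star S v0) \<phi>' p)) (gr S Y \<phi>') p"
      unfolding edge_contraction_def using b unfolding gr_simps(3) by blast
    thus ?case unfolding spanning_forest_morphism_def by (auto intro: generated.gen_base)
  qed
next
  case (gen_comp X Y p1 Z q)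
  have fq: "forest_morphism Y Z q" and fp: "forest_morphism X Y p1"
    using gen_comp.hyps unfolding forest_morphism_def by blast+
  have p1: "graph_morphism X Y p1" and q: "graph_morphism Y Z q" using forest_gm fq fp by blast+
  have ph': "graph_morphism Z (star S v0) \<phi>'" using ctd_gm[OF gen_comp.prems] .
  define \<phi>'' where "\<phi>'' = gcomp Y Z (star S v0) \<phi>' q"
  have c'': "ctd_morphism Y (star S v0) \<phi>''" unfolding \<phi>''_def
    by (rule ctd_comp[OF forest_ctd[OF fq] gen_comp.prems])
  have s1: "spanning_forest_morphism (gr S Y \<phi>'') (gr S Z \<phi>') q"
    unfolding \<phi>''_def by (rule gen_comp.IH(2)[OF gen_comp.prems])
  have s2: "spanning_forest_morphism (gr S X (gcomp X Y (star S v0) \<phi>'' p1)) (gr S Y \<phi>'') p1"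
    by (rule gen_comp.IH(1)[OF c''])
  have as: "gcomp X Y (star S v0) \<phi>'' p1 = gcomp X Z (star S v0) \<phi>' (gcomp X Y Z q p1)"
    unfolding \<phi>''_def by (rule gcomp_assoc[OF p1 q ph'])
  have gc: "gcomp (gr S X (gcomp X Y (star S v0) \<phi>'' p1)) (gr S Y \<phi>'') (gr S Z \<phi>') = gcomp X Y Z"
    by (rule gcomp_cong) (simp_all add: gr_simps)
  show ?case using sf_comp[OF s2 s1, unfolded gc, unfolded as] .
qed

definition agg :: "('f,'v) graph \<Rightarrow> ('f,'v) graph" where
  "agg G = G\<lparr>gi := (\<lambda>f. if f \<in> flags G then f else undefined)\<rparr>"

lemma agg_simps: "flags (agg G) = flags G" "verts (agg G) = verts G" "bd (agg G) = bd G"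
  "gi (agg G) f = (if f \<in> flags G then f else undefined)"
  by (simp_all add: agg_def)

lemma agg_aggregate: "wf_graph G \<Longrightarrow> aggregate (agg G)"
  unfolding aggregate_def wf_graph_def agg_simps by auto

lemma agg_id: "aggregate X \<Longrightarrow> agg X = X"
  unfolding agg_def aggregate_def wf_graph_def by (cases X) (auto simp: fun_eq_iff)

lemma agg_gr: "agg (gr S X \<phi>) = agg X"
  unfolding agg_def gr_def by simp

lemma gm_agg:
  assumes p: "graph_morphism G H p"
  shows "graph_morphism (agg G) (agg H) p"
proof (rule gm_change[OF p])
  have wG: "wf_graph G" and wH: "wf_graph H" using gm_wfG[OF p] gm_wfH[OF p] .
  show "wf_graph (agg G)" "wf_graph (agg H)" using agg_aggregate wG wH by (auto simp: aggregate_def)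
  show "\<forall>f\<in>flags G - mF p ` flags H.
       gi (agg G) f \<noteq> f \<and> mI p f = gi (agg G) f \<or> gi (agg G) f = f \<and> gi (agg G) (mI p f) = mI p f"
  proof
    fix f assume f: "f \<in> flags G - mF p ` flags H"
    have "mI p f \<in> flags G" using gm_I[OF p f] by blast
    thus "gi (agg G) f \<noteq> f \<and> mI p f = gi (agg G) f \<or> gi (agg G) f = f \<and> gi (agg G) (mI p f) = mI p f"
      using f by (simp add: agg_simps)
  qed
  show "\<forall>f'\<in>flags H. gi (agg G) (mF p f') \<noteq> mF p f' \<longrightarrow> gi (agg G) (mF p f') = mF p (gi (agg H) f')"
    using gm_Fin[OF p] by (simp add: agg_simps)
qed (simp_all add: agg_simps)

lemma sf_forest:
  assumes "spanning_forest_morphism G H p"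
  shows "forest_morphism (agg G) (agg H) p"
  using assms unfolding spanning_forest_morphism_def
proof (induction rule: generated.induct)
  case (gen_base G H p)
  have p: "graph_morphism G H p" using gen_base.hyps by (auto simp: edge_contraction_def dest: iso_gm contr_gm)
  have aG: "aggregate (agg G)" and aH: "aggregate (agg H)"
    using agg_aggregate gm_wfG[OF p] gm_wfH[OF p] by blast+
  have ap: "graph_morphism (agg G) (agg H) p" by (rule gm_agg[OF p])
  have gc: "\<forall>f'\<in>flags (agg H). mF p (gi (agg H) f') = gi (agg G) (mF p f')"
    using gm_Fin[OF p] by (simp add: agg_simps)
  from gen_base.hyps show ?case
  proof
    assume a: "graph_iso G H p"
    have "agg_iso (agg G) (agg H) p"
      unfolding agg_iso_def graph_iso_def using aG aH ap gc a unfolding graph_iso_def agg_simps by simp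
    thus ?case unfolding forest_morphism_def by (auto intro: generated.gen_base)
  next
    assume "edge_contraction G H p"
    then obtain s t where c: "contraction_at G H p s t" and b: "bd G s \<noteq> bd G t"
      unfolding edge_contraction_def by blast
    have "contraction_at (agg G) (agg H) p s t"
      using c ap gc unfolding contraction_at_def agg_simps by simp
    hence "virtual_edge_contraction (agg G) (agg H) p"
      unfolding virtual_edge_contraction_def using aG aH b by (auto simp: agg_simps)
    thus ?case unfolding forest_morphism_def by (auto intro: generated.gen_base)
  qed
next
  case (gen_comp G H p K q)
  have gc: "gcomp (agg G) (agg H) (agg K) = gcomp G H K"
    by (rule gcomp_cong) (simp_all add: agg_simps)
  show ?case using gen_comp.IH unfolding forest_morphism_def
    using generated.gen_comp[of _ "agg G" "agg H" p "agg K" q] unfolding gc by blast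
qed



definition Eset :: "('f,'v) graph \<Rightarrow> ('f,'v) graph \<Rightarrow> ('f,'v) gmor \<Rightarrow> ('v \<times> 'v) set" where
  "Eset X Y p = {(bd X f, bd X (mI p f)) | f. f \<in> flags X - mF p ` flags Y}"

lemma EsetI: "f \<in> flags X - mF p ` flags Y \<Longrightarrow> (bd X f, bd X (mI p f)) \<in> Eset X Y p"
  unfolding Eset_def by blast

lemma Eset_comp_sub:
  assumes p: "graph_morphism X Y p" and q: "graph_morphism Y Z q"
  shows "Eset X Y p \<subseteq> Eset X Z (gcomp X Y Z q p)"
proof
  fix e assume "e \<in> Eset X Y p"
  then obtain f where f: "f \<in> flags X - mF p ` flags Y" and e: "e = (bd X f, bd X (mI p f))"
    unfolding Eset_def by blast
  have qim: "mF q ` flags Z \<subseteq> flags Y" using gm_Fim[OF q] .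
  have im: "mF (gcomp X Y Z q p) ` flags Z = mF p ` mF q ` flags Z" by (rule gcomp_mF_image[OF qim])
  have d: "f \<in> flags X - mF p ` mF q ` flags Z" using f qim by blast
  have d2: "f \<in> flags X - mF (gcomp X Y Z q p) ` flags Z" unfolding im using d .
  have "mI (gcomp X Y Z q p) f = mI p f" using gcomp_mI_out[OF d] f by blast
  thus "e \<in> Eset X Z (gcomp X Y Z q p)" using EsetI[OF d2] e by simp
qed

lemma ctd_conn:
  assumes "ctd_morphism X Y p"
  shows "\<And>v w. v \<in> verts X \<Longrightarrow> w \<in> verts X \<Longrightarrow> mV p v = mV p w \<Longrightarrow> (v,w) \<in> (Eset X Y p)\<^sup>*"
  using assms unfolding ctd_morphism_def
proof (induction rule: generated.induct)
  case (gen_base X Y p)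
  show ?case
  proof (cases "agg_iso X Y p")
    case True
    assume "agg_iso X Y p"
    hence "inj_on (mV p) (verts X)" by (simp add: agg_iso_def graph_iso_def bij_betw_def)
    hence "v = w" using gen_base.prems by (auto simp: inj_on_eq_iff)
    thus ?thesis by simp
  next
    case False
    hence "virtual_edge_contraction X Y p \<or> loop_contraction X Y p" using gen_base.hyps by blast
    then obtain s t where c: "contraction_at X Y p s t"
      unfolding virtual_edge_contraction_def loop_contraction_def by blast
    have cd: "s \<in> flags X" "t \<in> flags X" "s \<noteq> t" "mF p ` flags Y = flags X - {s,t}" "mI p s = t"
      "\<forall>v\<in>verts X. \<forall>w\<in>verts X. mV p v = mV p w \<longleftrightarrow> v = w \<or> {v,w} = {bd X s, bd X t}"
      using c unfolding contraction_at_def by blast+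
    have p: "graph_morphism X Y p" using contr_gm[OF c] .
    have sd: "s \<in> flags X - mF p ` flags Y" and td: "t \<in> flags X - mF p ` flags Y" using cd by auto
    have mt: "mI p t = s" using gm_I[OF p sd] cd(5) by simp
    have e1: "(bd X s, bd X t) \<in> Eset X Y p" using EsetI[OF sd] cd(5) by simp
    have e2: "(bd X t, bd X s) \<in> Eset X Y p" using EsetI[OF td] mt by simp
    have "v = w \<or> {v,w} = {bd X s, bd X t}" using cd(6) gen_base.prems by blast
    thus ?thesis
    proof (elim disjE)
      assume "v = w" thus ?thesis by simp
    next
      assume "{v,w} = {bd X s, bd X t}"
      hence "(v = bd X s \<and> w = bd X t) \<or> (v = bd X t \<and> w = bd X s)" by (auto simp: doubleton_eq_iff)
      thus ?thesis using e1 e2 by auto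
    qed
  qed
next
  case (gen_comp X Y p Z q)
  have p: "graph_morphism X Y p" and q: "graph_morphism Y Z q"
    using gen_comp.hyps ctd_gm[unfolded ctd_morphism_def] by blast+
  let ?r = "gcomp X Y Z q p"
  have sub: "Eset X Y p \<subseteq> Eset X Z ?r" by (rule Eset_comp_sub[OF p q])
  have base0: "\<And>v w. v \<in> verts X \<Longrightarrow> w \<in> verts X \<Longrightarrow> mV p v = mV p w \<Longrightarrow> (v,w) \<in> (Eset X Z ?r)\<^sup>*"
  proof -
    fix v w assume "v \<in> verts X" "w \<in> verts X" "mV p v = mV p w"
    hence "(v,w) \<in> (Eset X Y p)\<^sup>*" by (rule gen_comp.IH(1))
    thus "(v,w) \<in> (Eset X Z ?r)\<^sup>*" using rtrancl_mono[OF sub] by (rule subsetD[rotated])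
  qed
  have lift: "\<And>y1 y2. (y1,y2) \<in> (Eset Y Z q)\<^sup>* \<Longrightarrow> \<forall>v w. v \<in> verts X \<longrightarrow> w \<in> verts X \<longrightarrow>
       mV p v = y1 \<longrightarrow> mV p w = y2 \<longrightarrow> (v,w) \<in> (Eset X Z ?r)\<^sup>*"
  proof -
    fix y1 y2 assume "(y1,y2) \<in> (Eset Y Z q)\<^sup>*"
    thus "\<forall>v w. v \<in> verts X \<longrightarrow> w \<in> verts X \<longrightarrow>
       mV p v = y1 \<longrightarrow> mV p w = y2 \<longrightarrow> (v,w) \<in> (Eset X Z ?r)\<^sup>*"
    proof (induction rule: rtrancl_induct)
      case base show ?case
      proof (intro allI impI)
        fix v w assume "v \<in> verts X" "w \<in> verts X" "mV p v = y1" "mV p w = y1"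
        thus "(v, w) \<in> (Eset X Z ?r)\<^sup>*" using base0 by simp
      qed
    next
      case (step y z)
      show ?case
      proof (intro allI impI)
        fix v w assume v: "v \<in> verts X" and w: "w \<in> verts X" and pv: "mV p v = y1" and pw: "mV p w = z"
        from step.hyps(2) obtain g where g: "g \<in> flags Y - mF q ` flags Z"
          and yz: "y = bd Y g" "z = bd Y (mI q g)" unfolding Eset_def by blast
        have gY: "g \<in> flags Y" using g by blast
        have mg: "mI q g \<in> flags Y" using gm_I[OF q g] by blast
        have wX: "wf_graph X" using gm_wfG[OF p] .
        have pg: "mF p g \<in> flags X" using gm_Fin[OF p gY] .
        have pmg: "mF p (mI q g) \<in> flags X" using gm_Fin[OF p mg] .
        define x2 where "x2 = bd X (mF p g)"
        define x3 where "x3 = bd X (mF p (mI q g))"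
        have x2: "x2 \<in> verts X" "mV p x2 = y" unfolding x2_def yz using wfD(3)[OF wX pg] gm_bd[OF p gY] by auto
        have x3: "x3 \<in> verts X" "mV p x3 = z" unfolding x3_def yz using wfD(3)[OF wX pmg] gm_bd[OF p mg] by auto
        have "(v, x2) \<in> (Eset X Z ?r)\<^sup>*" using step.IH v x2(1) x2(2) pv by simp
        moreover have "(x2, x3) \<in> Eset X Z ?r"
        proof -
          have qim: "mF q ` flags Z \<subseteq> flags Y" using gm_Fim[OF q] .
          have pinj: "inj_on (mF p) (flags Y)" using gm_inj[OF p] .
          have im: "mF ?r ` flags Z = mF p ` mF q ` flags Z" by (rule gcomp_mF_image[OF qim])
          have d: "mF p g \<in> flags X - mF p ` mF q ` flags Z" using g pg pinj qim by (auto simp: inj_on_eq_iff)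
          have d2: "mF p g \<in> flags X - mF ?r ` flags Z" unfolding im using d .
          have "mI ?r (mF p g) = mF p (mI q g)" by (rule gcomp_mI_in[OF d refl gY pinj])
          thus ?thesis using EsetI[OF d2] unfolding x2_def x3_def by simp
        qed
        moreover have "(x3, w) \<in> (Eset X Z ?r)\<^sup>*" using base0[OF x3(1) w] x3(2) pw by simp
        ultimately show "(v, w) \<in> (Eset X Z ?r)\<^sup>*" by (meson rtrancl_into_rtrancl rtrancl_trans)
      qed
    qed
  qed
  have "mV q (mV p v) = mV q (mV p w)" using gen_comp.prems by (simp add: gcomp_simps)
  moreover have "mV p v \<in> verts Y" "mV p w \<in> verts Y" using gm_Vin[OF p] gen_comp.prems by auto
  ultimately have "(mV p v, mV p w) \<in> (Eset Y Z q)\<^sup>*" using gen_comp.IH(2) by blast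
  thus ?case using lift gen_comp.prems by simp
qed

lemma gr_gi_out:
  assumes X: "aggregate X" and ph: "graph_morphism X (star S v0) \<phi>" and f: "f \<in> flags X - mF \<phi> ` S"
  shows "gi (gr S X \<phi>) f = mI \<phi> f" "mI \<phi> f \<noteq> f" "mI \<phi> f \<in> flags X - mF \<phi> ` S"
  using f gm_I[OF ph, unfolded star_simps] by (auto simp: gr_simps)

lemma gr_gi_in:
  "f \<in> mF \<phi> ` S \<Longrightarrow> f \<in> flags X \<Longrightarrow> gi (gr S X \<phi>) f = f"
  by (simp add: gr_simps)

lemma gr_adj:
  assumes X: "aggregate X" and ph: "graph_morphism X (star S v0) \<phi>"
  shows "adj (gr S X \<phi>) = Eset X (star S v0) \<phi>"
proof -
  have eq: "\<And>f. f \<in> flags X \<Longrightarrow> (gi (gr S X \<phi>) f \<noteq> f) = (f \<notin> mF \<phi> ` S)"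
  proof -
    fix f assume f: "f \<in> flags X"
    show "(gi (gr S X \<phi>) f \<noteq> f) = (f \<notin> mF \<phi> ` S)"
    proof (cases "f \<in> mF \<phi> ` S")
      case True thus ?thesis using gr_gi_in[OF True f] by simp
    next
      case False
      hence d: "f \<in> flags X - mF \<phi> ` S" using f by blast
      show ?thesis using gr_gi_out(1,2)[OF X ph d] False by simp
    qed
  qed
  show ?thesis
  proof (intro equalityI subsetI)
    fix e assume "e \<in> adj (gr S X \<phi>)"
    then obtain f where f: "f \<in> flags X" "gi (gr S X \<phi>) f \<noteq> f"
      and e: "e = (bd X f, bd X (gi (gr S X \<phi>) f))" unfolding adj_def gr_simps by blast
    have d: "f \<in> flags X - mF \<phi> ` S" using eq f by blast
    show "e \<in> Eset X (star S v0) \<phi>" using EsetI[of f X \<phi> "star S v0"] d e gr_gi_out(1)[OF X ph d]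
      by (simp add: star_simps)
  next
    fix e assume "e \<in> Eset X (star S v0) \<phi>"
    then obtain f where d: "f \<in> flags X - mF \<phi> ` S" and e: "e = (bd X f, bd X (mI \<phi> f))"
      unfolding Eset_def star_simps by blast
    have "gi (gr S X \<phi>) f \<noteq> f" using gr_gi_out[OF X ph d] by simp
    thus "e \<in> adj (gr S X \<phi>)" unfolding adj_def gr_simps using d e gr_gi_out(1)[OF X ph d] by auto
  qed
qed

lemma gr_outer:
  assumes X: "aggregate X" and ph: "graph_morphism X (star S v0) \<phi>"
  shows "outer_flags (gr S X \<phi>) = mF \<phi> ` S"
proof -
  have im: "mF \<phi> ` S \<subseteq> flags X" using gm_Fim[OF ph] unfolding star_simps .
  show ?thesis unfolding outer_flags_def gr_simps(1)
  proof (intro equalityI subsetI)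
    fix f assume "f \<in> {f \<in> flags X. gi (gr S X \<phi>) f = f}"
    hence f: "f \<in> flags X" "gi (gr S X \<phi>) f = f" by auto
    show "f \<in> mF \<phi> ` S"
    proof (rule ccontr)
      assume "f \<notin> mF \<phi> ` S"
      hence d: "f \<in> flags X - mF \<phi> ` S" using f by blast
      show False using gr_gi_out(1,2)[OF X ph d] f(2) by simp
    qed
  next
    fix f assume f: "f \<in> mF \<phi> ` S"
    hence "f \<in> flags X" using im by blast
    thus "f \<in> {f \<in> flags X. gi (gr S X \<phi>) f = f}" using gr_gi_in[OF f] by simp
  qed
qed

lemma gr_connected:
  assumes X: "aggregate X" and ph: "ctd_morphism X (star S v0) \<phi>"
  shows "connected_graph (gr S X \<phi>)"
proof -
  have g: "graph_morphism X (star S v0) \<phi>" using ctd_gm[OF ph] .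
  have V: "mV \<phi> ` verts X = {v0}" using gm_V[OF g] unfolding star_simps .
  show ?thesis unfolding connected_graph_def
  proof (intro conjI ballI)
    show "wf_graph (gr S X \<phi>)" by (rule gr_wf[OF X g])
    show "verts (gr S X \<phi>) \<noteq> {}" using V by (auto simp: gr_simps)
    fix v w assume "v \<in> verts (gr S X \<phi>)" "w \<in> verts (gr S X \<phi>)"
    hence v: "v \<in> verts X" and w: "w \<in> verts X" by (simp_all add: gr_simps)
    have "mV \<phi> v \<in> {v0}" "mV \<phi> w \<in> {v0}" using V v w by (metis imageI)+
    hence "mV \<phi> v = mV \<phi> w" by simp
    thus "(v, w) \<in> (adj (gr S X \<phi>))\<^sup>*" unfolding gr_adj[OF X g] using ctd_conn[OF ph v w] by blast
  qed
qed



definition rel :: "('f \<Rightarrow> 'f) \<Rightarrow> ('f,'v) graph \<Rightarrow> ('f,'v) graph" where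
  "rel \<pi> G = \<lparr> flags = \<pi> ` flags G, verts = verts G,
     bd = (\<lambda>f. if f \<in> \<pi> ` flags G then bd G (inv \<pi> f) else undefined),
     gi = (\<lambda>f. if f \<in> \<pi> ` flags G then \<pi> (gi G (inv \<pi> f)) else undefined) \<rparr>"

definition rho :: "('f \<Rightarrow> 'f) \<Rightarrow> ('f,'v) graph \<Rightarrow> ('f,'v) gmor" where
  "rho \<pi> G = \<lparr> mV = (\<lambda>v. if v \<in> verts G then v else undefined),
     mF = (\<lambda>f. if f \<in> \<pi> ` flags G then inv \<pi> f else undefined), mI = (\<lambda>_. undefined) \<rparr>"

definition rho' :: "('f \<Rightarrow> 'f) \<Rightarrow> ('f,'v) graph \<Rightarrow> ('f,'v) gmor" where
  "rho' \<pi> G = \<lparr> mV = (\<lambda>v. if v \<in> verts G then v else undefined),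
     mF = (\<lambda>f. if f \<in> flags G then \<pi> f else undefined), mI = (\<lambda>_. undefined) \<rparr>"

lemma rel_simps: "flags (rel \<pi> G) = \<pi> ` flags G" "verts (rel \<pi> G) = verts G"
  "bd (rel \<pi> G) f = (if f \<in> \<pi> ` flags G then bd G (inv \<pi> f) else undefined)"
  "gi (rel \<pi> G) f = (if f \<in> \<pi> ` flags G then \<pi> (gi G (inv \<pi> f)) else undefined)"
  by (simp_all add: rel_def)

lemma rho_simps: "mV (rho \<pi> G) v = (if v \<in> verts G then v else undefined)"
  "mF (rho \<pi> G) f = (if f \<in> \<pi> ` flags G then inv \<pi> f else undefined)" "mI (rho \<pi> G) f = undefined"
  by (simp_all add: rho_def)

lemma rho'_simps: "mV (rho' \<pi> G) v = (if v \<in> verts G then v else undefined)"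
  "mF (rho' \<pi> G) f = (if f \<in> flags G then \<pi> f else undefined)" "mI (rho' \<pi> G) f = undefined"
  by (simp_all add: rho'_def)

lemma bij_inv1: "bij \<pi> \<Longrightarrow> inv \<pi> (\<pi> x) = x" by (simp add: bij_is_inj)
lemma bij_inv2: "bij \<pi> \<Longrightarrow> \<pi> (inv \<pi> x) = x" by (simp add: bij_is_surj surj_f_inv_f)

lemma rel_img: "bij \<pi> \<Longrightarrow> (f \<in> \<pi> ` A) = (inv \<pi> f \<in> A)"
  by (metis bij_inv2 bij_inv1 image_iff)

lemma rel_wf:
  assumes b: "bij \<pi>" and w: "wf_graph G"
  shows "wf_graph (rel \<pi> G)"
  unfolding wf_graph_def rel_simps
proof (intro conjI ballI allI impI)
  show "finite (\<pi> ` flags G)" "finite (verts G)" using wfD(1,2)[OF w] by auto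
  fix f
  { assume f: "f \<in> \<pi> ` flags G"
    hence f': "inv \<pi> f \<in> flags G" using rel_img[OF b] by blast
    show "(if f \<in> \<pi> ` flags G then bd G (inv \<pi> f) else undefined) \<in> verts G"
      using f wfD(3)[OF w f'] by simp
    have g: "gi G (inv \<pi> f) \<in> flags G" using wfD(4)[OF w f'] .
    show "(if f \<in> \<pi> ` flags G then \<pi> (gi G (inv \<pi> f)) else undefined) \<in> \<pi> ` flags G"
      using f g by simp
    have "\<pi> (gi G (inv \<pi> f)) \<in> \<pi> ` flags G" using g by blast
    thus "(if (if f \<in> \<pi> ` flags G then \<pi> (gi G (inv \<pi> f)) else undefined) \<in> \<pi> ` flags G
        then \<pi> (gi G (inv \<pi> (if f \<in> \<pi> ` flags G then \<pi> (gi G (inv \<pi> f)) else undefined))) else undefined) = f"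
      using f wfD(5)[OF w f'] bij_inv1[OF b] bij_inv2[OF b] by simp }
  { assume "f \<notin> \<pi> ` flags G"
    thus "(if f \<in> \<pi> ` flags G then bd G (inv \<pi> f) else undefined) = undefined"
      "(if f \<in> \<pi> ` flags G then \<pi> (gi G (inv \<pi> f)) else undefined) = undefined" by simp_all }
qed

lemma rho_iso:
  assumes b: "bij \<pi>" and w: "wf_graph G"
  shows "graph_iso G (rel \<pi> G) (rho \<pi> G)"
proof -
  have im: "mF (rho \<pi> G) ` flags (rel \<pi> G) = flags G"
  proof (intro equalityI subsetI)
    fix f assume "f \<in> mF (rho \<pi> G) ` flags (rel \<pi> G)"
    then obtain g where "g \<in> flags G" "f = mF (rho \<pi> G) (\<pi> g)" by (auto simp: rel_simps)
    thus "f \<in> flags G" using bij_inv1[OF b] by (simp add: rho_simps)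
  next
    fix f assume "f \<in> flags G"
    moreover have "mF (rho \<pi> G) (\<pi> f) = f" using \<open>f \<in> flags G\<close> bij_inv1[OF b] by (simp add: rho_simps)
    ultimately show "f \<in> mF (rho \<pi> G) ` flags (rel \<pi> G)" by (force simp: rel_simps)
  qed
  have inj: "inj_on (mF (rho \<pi> G)) (flags (rel \<pi> G))"
  proof (rule inj_onI)
    fix x y assume "x \<in> flags (rel \<pi> G)" "y \<in> flags (rel \<pi> G)" "mF (rho \<pi> G) x = mF (rho \<pi> G) y"
    hence "inv \<pi> x = inv \<pi> y" by (simp add: rho_simps rel_simps)
    thus "x = y" by (metis bij_inv2[OF b])
  qed
  have bdc: "\<forall>f'\<in>flags (rel \<pi> G). mV (rho \<pi> G) (bd G (mF (rho \<pi> G) f')) = bd (rel \<pi> G) f'"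
  proof
    fix f' assume f': "f' \<in> flags (rel \<pi> G)"
    hence "inv \<pi> f' \<in> flags G" using rel_img[OF b] by (simp add: rel_simps)
    thus "mV (rho \<pi> G) (bd G (mF (rho \<pi> G) f')) = bd (rel \<pi> G) f'"
      using f' wfD(3)[OF w] by (simp add: rho_simps rel_simps)
  qed
  have gic: "\<forall>f'\<in>flags (rel \<pi> G). mF (rho \<pi> G) (gi (rel \<pi> G) f') = gi G (mF (rho \<pi> G) f')"
  proof
    fix f' assume f': "f' \<in> flags (rel \<pi> G)"
    hence a: "inv \<pi> f' \<in> flags G" using rel_img[OF b] by (simp add: rel_simps)
    have "gi G (inv \<pi> f') \<in> flags G" using wfD(4)[OF w a] .
    hence "\<pi> (gi G (inv \<pi> f')) \<in> \<pi> ` flags G" by blast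
    thus "mF (rho \<pi> G) (gi (rel \<pi> G) f') = gi G (mF (rho \<pi> G) f')"
      using f' bij_inv1[OF b] by (simp add: rho_simps rel_simps)
  qed
  have gm: "graph_morphism G (rel \<pi> G) (rho \<pi> G)"
    unfolding graph_morphism_def
  proof (intro conjI)
    show "wf_graph G" by fact
    show "wf_graph (rel \<pi> G)" by (rule rel_wf[OF b w])
    show "mV (rho \<pi> G) ` verts G = verts (rel \<pi> G)" by (force simp: rho_simps rel_simps)
    show "mF (rho \<pi> G) ` flags (rel \<pi> G) \<subseteq> flags G" using im by simp
    show "inj_on (mF (rho \<pi> G)) (flags (rel \<pi> G))" by (rule inj)
    show "\<forall>f'\<in>flags (rel \<pi> G). mV (rho \<pi> G) (bd G (mF (rho \<pi> G) f')) = bd (rel \<pi> G) f'" by (rule bdc)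
    show "\<forall>f'\<in>flags (rel \<pi> G). gi G (mF (rho \<pi> G) f') \<noteq> mF (rho \<pi> G) f' \<longrightarrow>
        gi G (mF (rho \<pi> G) f') = mF (rho \<pi> G) (gi (rel \<pi> G) f')" using gic by simp
    show "\<forall>v. v \<notin> verts G \<longrightarrow> mV (rho \<pi> G) v = undefined" by (simp add: rho_simps)
    show "\<forall>f'. f' \<notin> flags (rel \<pi> G) \<longrightarrow> mF (rho \<pi> G) f' = undefined" by (simp add: rho_simps rel_simps)
    show "\<forall>f. f \<notin> flags G - mF (rho \<pi> G) ` flags (rel \<pi> G) \<longrightarrow> mI (rho \<pi> G) f = undefined"
      by (simp add: rho_simps)
  qed (simp_all add: im)
  have bV: "bij_betw (mV (rho \<pi> G)) (verts G) (verts (rel \<pi> G))"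
    unfolding bij_betw_def inj_on_def by (force simp: rho_simps rel_simps)
  have bF: "bij_betw (mF (rho \<pi> G)) (flags (rel \<pi> G)) (flags G)"
    unfolding bij_betw_def using inj im by simp
  show ?thesis unfolding graph_iso_def using gm bV bF gic by simp
qed

lemma rho'_iso:
  assumes b: "bij \<pi>" and w: "wf_graph G"
  shows "graph_iso (rel \<pi> G) G (rho' \<pi> G)"
proof -
  have im: "mF (rho' \<pi> G) ` flags G = flags (rel \<pi> G)"
    by (force simp: rho'_simps rel_simps)
  have inj: "inj_on (mF (rho' \<pi> G)) (flags G)"
  proof (rule inj_onI)
    fix x y assume "x \<in> flags G" "y \<in> flags G" "mF (rho' \<pi> G) x = mF (rho' \<pi> G) y"
    hence "\<pi> x = \<pi> y" by (simp add: rho'_simps)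
    thus "x = y" by (metis bij_inv1[OF b])
  qed
  have bdc: "\<forall>f'\<in>flags G. mV (rho' \<pi> G) (bd (rel \<pi> G) (mF (rho' \<pi> G) f')) = bd G f'"
  proof
    fix f' assume f': "f' \<in> flags G"
    have "\<pi> f' \<in> \<pi> ` flags G" using f' by blast
    thus "mV (rho' \<pi> G) (bd (rel \<pi> G) (mF (rho' \<pi> G) f')) = bd G f'"
      using f' wfD(3)[OF w f'] bij_inv1[OF b] by (simp add: rho'_simps rel_simps)
  qed
  have gic: "\<forall>f'\<in>flags G. mF (rho' \<pi> G) (gi G f') = gi (rel \<pi> G) (mF (rho' \<pi> G) f')"
  proof
    fix f' assume f': "f' \<in> flags G"
    have "\<pi> f' \<in> \<pi> ` flags G" using f' by blast
    thus "mF (rho' \<pi> G) (gi G f') = gi (rel \<pi> G) (mF (rho' \<pi> G) f')"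
      using f' wfD(4)[OF w f'] bij_inv1[OF b] by (simp add: rho'_simps rel_simps)
  qed
  have gm: "graph_morphism (rel \<pi> G) G (rho' \<pi> G)"
    unfolding graph_morphism_def
  proof (intro conjI)
    show "wf_graph G" by fact
    show "wf_graph (rel \<pi> G)" by (rule rel_wf[OF b w])
    show "mV (rho' \<pi> G) ` verts (rel \<pi> G) = verts G" by (force simp: rho'_simps rel_simps)
    show "mF (rho' \<pi> G) ` flags G \<subseteq> flags (rel \<pi> G)" using im by simp
    show "inj_on (mF (rho' \<pi> G)) (flags G)" by (rule inj)
    show "\<forall>f'\<in>flags G. mV (rho' \<pi> G) (bd (rel \<pi> G) (mF (rho' \<pi> G) f')) = bd G f'" by (rule bdc)
    show "\<forall>f'\<in>flags G. gi (rel \<pi> G) (mF (rho' \<pi> G) f') \<noteq> mF (rho' \<pi> G) f' \<longrightarrow>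
        gi (rel \<pi> G) (mF (rho' \<pi> G) f') = mF (rho' \<pi> G) (gi G f')" using gic by simp
    show "\<forall>v. v \<notin> verts (rel \<pi> G) \<longrightarrow> mV (rho' \<pi> G) v = undefined" by (simp add: rho'_simps rel_simps)
    show "\<forall>f'. f' \<notin> flags G \<longrightarrow> mF (rho' \<pi> G) f' = undefined" by (simp add: rho'_simps)
    show "\<forall>f. f \<notin> flags (rel \<pi> G) - mF (rho' \<pi> G) ` flags G \<longrightarrow> mI (rho' \<pi> G) f = undefined"
      by (simp add: rho'_simps)
  qed (simp_all add: im)
  have bV: "bij_betw (mV (rho' \<pi> G)) (verts (rel \<pi> G)) (verts G)"
    unfolding bij_betw_def inj_on_def by (force simp: rho'_simps rel_simps)
  have bF: "bij_betw (mF (rho' \<pi> G)) (flags G) (flags (rel \<pi> G))"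
    unfolding bij_betw_def using inj im by simp
  show ?thesis unfolding graph_iso_def using gm bV bF gic by simp
qed


lemma rho_inv1:
  assumes b: "bij \<pi>"
  shows "gcomp G (rel \<pi> G) G (rho' \<pi> G) (rho \<pi> G) = gid G"
proof (rule gmor.equality)
  show "mV (gcomp G (rel \<pi> G) G (rho' \<pi> G) (rho \<pi> G)) = mV (gid G)"
    by (auto simp: gcomp_simps rho_simps rho'_simps gid_simps)
  show "mF (gcomp G (rel \<pi> G) G (rho' \<pi> G) (rho \<pi> G)) = mF (gid G)"
    using bij_inv1[OF b] by (auto simp: gcomp_simps rho_simps rho'_simps gid_simps)
  have im: "mF (rho \<pi> G) ` mF (rho' \<pi> G) ` flags G = flags G"
  proof -
    have e1: "mF (rho' \<pi> G) ` flags G = \<pi> ` flags G" by (rule image_cong) (simp_all add: rho'_simps)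
    have h: "\<And>x. x \<in> flags G \<Longrightarrow> mF (rho \<pi> G) (\<pi> x) = x" using bij_inv1[OF b] by (simp add: rho_simps)
    have "(\<lambda>x. mF (rho \<pi> G) (\<pi> x)) ` flags G = (\<lambda>x. x) ` flags G" by (rule image_cong) (simp_all add: h)
    thus ?thesis unfolding e1 image_image by simp
  qed
  show "mI (gcomp G (rel \<pi> G) G (rho' \<pi> G) (rho \<pi> G)) = mI (gid G)"
  proof
    fix f
    have "f \<notin> flags G - mF (rho \<pi> G) ` mF (rho' \<pi> G) ` flags G" unfolding im by blast
    thus "mI (gcomp G (rel \<pi> G) G (rho' \<pi> G) (rho \<pi> G)) f = mI (gid G) f"
      using gcomp_mI_undef by (simp add: gid_simps)
  qed
qed simp

lemma rho_inv2:
  assumes b: "bij \<pi>"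
  shows "gcomp (rel \<pi> G) G (rel \<pi> G) (rho \<pi> G) (rho' \<pi> G) = gid (rel \<pi> G)"
proof (rule gmor.equality)
  show "mV (gcomp (rel \<pi> G) G (rel \<pi> G) (rho \<pi> G) (rho' \<pi> G)) = mV (gid (rel \<pi> G))"
    by (auto simp: gcomp_simps rho_simps rho'_simps gid_simps rel_simps)
  have a: "\<And>f. f \<in> \<pi> ` flags G \<Longrightarrow> inv \<pi> f \<in> flags G" using rel_img[OF b] by blast
  show "mF (gcomp (rel \<pi> G) G (rel \<pi> G) (rho \<pi> G) (rho' \<pi> G)) = mF (gid (rel \<pi> G))"
    using bij_inv2[OF b] a by (auto simp: gcomp_simps rho_simps rho'_simps gid_simps rel_simps)
  have im: "mF (rho' \<pi> G) ` mF (rho \<pi> G) ` flags (rel \<pi> G) = flags (rel \<pi> G)"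
  proof -
    have h: "\<And>x. x \<in> \<pi> ` flags G \<Longrightarrow> mF (rho' \<pi> G) (mF (rho \<pi> G) x) = x"
      using bij_inv2[OF b] a by (simp add: rho_simps rho'_simps)
    have "(\<lambda>x. mF (rho' \<pi> G) (mF (rho \<pi> G) x)) ` (\<pi> ` flags G) = (\<lambda>x. x) ` (\<pi> ` flags G)"
      by (rule image_cong) (simp_all add: h)
    thus ?thesis unfolding rel_simps image_image by simp
  qed
  show "mI (gcomp (rel \<pi> G) G (rel \<pi> G) (rho \<pi> G) (rho' \<pi> G)) = mI (gid (rel \<pi> G))"
  proof
    fix f
    have "f \<notin> flags (rel \<pi> G) - mF (rho' \<pi> G) ` mF (rho \<pi> G) ` flags (rel \<pi> G)" unfolding im by blast
    thus "mI (gcomp (rel \<pi> G) G (rel \<pi> G) (rho \<pi> G) (rho' \<pi> G)) f = mI (gid (rel \<pi> G)) f"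
      using gcomp_mI_undef by (simp add: gid_simps)
  qed
qed simp


lemma rel_adj:
  assumes b: "bij \<pi>" and w: "wf_graph G"
  shows "adj (rel \<pi> G) = adj G"
proof (intro equalityI subsetI)
  fix e assume "e \<in> adj (rel \<pi> G)"
  then obtain f where f: "f \<in> \<pi> ` flags G" "gi (rel \<pi> G) f \<noteq> f"
    and e: "e = (bd (rel \<pi> G) f, bd (rel \<pi> G) (gi (rel \<pi> G) f))" unfolding adj_def rel_simps(1) by blast
  then obtain g where g: "g \<in> flags G" and fg: "f = \<pi> g" by blast
  have gg: "gi G g \<in> flags G" using wfD(4)[OF w g] .
  have "\<pi> (gi G g) \<in> \<pi> ` flags G" using gg by blast
  hence e': "e = (bd G g, bd G (gi G g))" using e fg g bij_inv1[OF b] by (simp add: rel_simps)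
  have "gi G g \<noteq> g" using f(2) fg g bij_inv1[OF b] by (auto simp: rel_simps)
  thus "e \<in> adj G" unfolding adj_def using g e' by blast
next
  fix e assume "e \<in> adj G"
  then obtain g where g: "g \<in> flags G" "gi G g \<noteq> g" and e: "e = (bd G g, bd G (gi G g))"
    unfolding adj_def by blast
  have gg: "gi G g \<in> flags G" using wfD(4)[OF w g(1)] .
  have pg: "\<pi> g \<in> \<pi> ` flags G" "\<pi> (gi G g) \<in> \<pi> ` flags G" using g gg by blast+
  have n: "gi (rel \<pi> G) (\<pi> g) \<noteq> \<pi> g" using pg g(2) bij_inv1[OF b] bij_is_inj[OF b]
    by (auto simp: rel_simps inj_eq)
  have "e = (bd (rel \<pi> G) (\<pi> g), bd (rel \<pi> G) (gi (rel \<pi> G) (\<pi> g)))"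
    using e pg bij_inv1[OF b] by (simp add: rel_simps)
  thus "e \<in> adj (rel \<pi> G)" unfolding adj_def rel_simps(1) using pg(1) n by blast
qed

lemma rel_connected:
  assumes b: "bij \<pi>" and c: "connected_graph G"
  shows "connected_graph (rel \<pi> G)"
proof -
  have w: "wf_graph G" using c by (simp add: connected_graph_def)
  show ?thesis using c rel_wf[OF b w] unfolding connected_graph_def rel_adj[OF b w] rel_simps by blast
qed

lemma rel_outer:
  assumes b: "bij \<pi>" and w: "wf_graph G"
  shows "outer_flags (rel \<pi> G) = \<pi> ` outer_flags G"
proof (intro equalityI subsetI)
  fix f assume "f \<in> outer_flags (rel \<pi> G)"
  hence f: "f \<in> \<pi> ` flags G" "gi (rel \<pi> G) f = f" unfolding outer_flags_def rel_simps(1) by blast+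
  then obtain g where g: "g \<in> flags G" and fg: "f = \<pi> g" by blast
  have "\<pi> (gi G g) = \<pi> g" using f(2) fg g bij_inv1[OF b] by (simp add: rel_simps)
  hence "gi G g = g" using bij_is_inj[OF b] by (simp add: inj_eq)
  thus "f \<in> \<pi> ` outer_flags G" unfolding outer_flags_def using g fg by blast
next
  fix f assume "f \<in> \<pi> ` outer_flags G"
  then obtain g where g: "g \<in> flags G" "gi G g = g" and fg: "f = \<pi> g" unfolding outer_flags_def by blast
  have "\<pi> g \<in> \<pi> ` flags G" using g by blast
  thus "f \<in> outer_flags (rel \<pi> G)" unfolding outer_flags_def rel_simps(1) using fg g bij_inv1[OF b]
    by (simp add: rel_simps)
qed

lemma rel_id: "wf_graph G \<Longrightarrow> rel id G = G"
  unfolding rel_def wf_graph_def by (cases G) (auto simp: fun_eq_iff)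

lemma perm_exists:
  fixes g :: "'a \<Rightarrow> 'a"
  assumes fin: "finite S" and inj: "inj_on g S"
  shows "\<exists>\<pi>. bij \<pi> \<and> (\<forall>s\<in>S. \<pi> (g s) = s)"
proof -
  define A where "A = g ` S"
  have finA: "finite A" unfolding A_def using fin by simp
  have cA: "card A = card S" unfolding A_def using card_image[OF inj] .
  have c1: "card (S - A) = card (A - S)"
  proof -
    have "card (S - A) = card S - card (S \<inter> A)" using fin by (simp add: card_Diff_subset_Int)
    moreover have "card (A - S) = card A - card (A \<inter> S)" using finA by (simp add: card_Diff_subset_Int)
    ultimately show ?thesis using cA by (simp add: Int_commute)
  qed
  obtain k where k: "bij_betw k (S - A) (A - S)"
    using finite_same_card_bij[of "S - A" "A - S"] fin finA c1 by auto
  define \<pi> where "\<pi> x = (if x \<in> A then inv_into S g x else if x \<in> S - A then k x else x)" for x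
  have b1: "bij_betw \<pi> A S"
  proof -
    have "bij_betw g S A" unfolding A_def using inj by (simp add: bij_betw_def)
    hence "bij_betw (inv_into S g) A S" by (rule bij_betw_inv_into)
    thus ?thesis by (rule bij_betw_cong[THEN iffD1, rotated]) (simp add: \<pi>_def)
  qed
  have b2: "bij_betw \<pi> (S - A) (A - S)"
    using k by (rule bij_betw_cong[THEN iffD1, rotated]) (simp add: \<pi>_def)
  have b3: "bij_betw \<pi> (- (A \<union> S)) (- (A \<union> S))"
    by (rule bij_betw_cong[THEN iffD1, rotated, of id]) (auto simp: \<pi>_def)
  have b12: "bij_betw \<pi> (A \<union> (S - A)) (S \<union> (A - S))"
    by (rule bij_betw_combine[OF b1 b2]) blast
  have b123: "bij_betw \<pi> ((A \<union> (S - A)) \<union> - (A \<union> S)) ((S \<union> (A - S)) \<union> - (A \<union> S))"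
    by (rule bij_betw_combine[OF b12 b3]) blast
  have u1: "(A \<union> (S - A)) \<union> - (A \<union> S) = UNIV" by blast
  have u2: "(S \<union> (A - S)) \<union> - (A \<union> S) = UNIV" by blast
  have "bij \<pi>" using b123 unfolding u1 u2 .
  moreover have "\<forall>s\<in>S. \<pi> (g s) = s" using inj by (simp add: \<pi>_def A_def inv_into_f_f)
  ultimately show ?thesis by blast
qed



lemma star_agg: "finite S \<Longrightarrow> aggregate (star S v0)"
  unfolding aggregate_def wf_graph_def star_simps by auto

lemma base_case:
  assumes c: "connected_graph d" and o: "outer_flags d = S" and fl: "flags d = S" and fin: "finite S"
  shows "\<exists>\<phi>. ctd_morphism (agg d) (star S v0) \<phi> \<and> (\<forall>s\<in>S. mF \<phi> s = s)"
proof -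
  have w: "wf_graph d" using c by (simp add: connected_graph_def)
  have gid: "\<And>f. f \<in> flags d \<Longrightarrow> gi d f = f" using o fl unfolding outer_flags_def by blast
  have adj0: "adj d = {}" unfolding adj_def using gid by auto
  obtain w0 where w0: "w0 \<in> verts d" using c by (auto simp: connected_graph_def)
  have V: "verts d = {w0}"
  proof -
    have "\<And>v. v \<in> verts d \<Longrightarrow> v = w0" using c w0 adj0 by (auto simp: connected_graph_def)
    thus ?thesis using w0 by blast
  qed
  define \<phi> :: "('a,'b) gmor" where "\<phi> = \<lparr> mV = (\<lambda>v. if v \<in> verts d then v0 else undefined),
     mF = (\<lambda>f. if f \<in> S then f else undefined), mI = (\<lambda>_. undefined) \<rparr>"
  have ps: "mV \<phi> v = (if v \<in> verts d then v0 else undefined)" "mF \<phi> f = (if f \<in> S then f else undefined)"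
    "mI \<phi> f = undefined" for v f by (simp_all add: \<phi>_def)
  have aX: "aggregate (agg d)" by (rule agg_aggregate[OF w])
  have aS: "aggregate (star S v0)" by (rule star_agg[OF fin])
  have imF: "mF \<phi> ` flags (star S v0) = flags (agg d)" by (force simp: ps star_simps agg_simps fl)
  have gm: "graph_morphism (agg d) (star S v0) \<phi>"
    unfolding graph_morphism_def
  proof (intro conjI)
    show "wf_graph (agg d)" "wf_graph (star S v0)" using aX aS by (simp_all add: aggregate_def)
    show "mV \<phi> ` verts (agg d) = verts (star S v0)" by (simp add: agg_simps star_simps V ps)
    show "mF \<phi> ` flags (star S v0) \<subseteq> flags (agg d)" using imF by simp
    show "inj_on (mF \<phi>) (flags (star S v0))" by (simp add: inj_on_def ps star_simps)
    show "\<forall>f'\<in>flags (star S v0). mV \<phi> (bd (agg d) (mF \<phi> f')) = bd (star S v0) f'"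
      using wfD(3)[OF w] by (simp add: ps star_simps agg_simps fl)
    show "\<forall>f'\<in>flags (star S v0). gi (agg d) (mF \<phi> f') \<noteq> mF \<phi> f' \<longrightarrow>
         gi (agg d) (mF \<phi> f') = mF \<phi> (gi (star S v0) f')" by (simp add: ps star_simps agg_simps fl)
    show "\<forall>v. v \<notin> verts (agg d) \<longrightarrow> mV \<phi> v = undefined" by (simp add: ps agg_simps)
    show "\<forall>f'. f' \<notin> flags (star S v0) \<longrightarrow> mF \<phi> f' = undefined" by (simp add: ps star_simps)
    show "\<forall>f. f \<notin> flags (agg d) - mF \<phi> ` flags (star S v0) \<longrightarrow> mI \<phi> f = undefined" by (simp add: ps)
  qed (simp_all add: imF)
  have iso: "agg_iso (agg d) (star S v0) \<phi>"
    unfolding agg_iso_def graph_iso_def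
  proof (intro conjI)
    show "bij_betw (mV \<phi>) (verts (agg d)) (verts (star S v0))"
      by (simp add: agg_simps star_simps V ps bij_betw_def)
    show "bij_betw (mF \<phi>) (flags (star S v0)) (flags (agg d))"
      unfolding bij_betw_def using imF by (simp add: inj_on_def ps star_simps)
    show "\<forall>f'\<in>flags (star S v0). mF \<phi> (gi (star S v0) f') = gi (agg d) (mF \<phi> f')"
      by (simp add: ps star_simps agg_simps fl)
  qed fact+
  have "ctd_morphism (agg d) (star S v0) \<phi>" unfolding ctd_morphism_def
    using iso by (auto intro: generated.gen_base)
  moreover have "\<forall>s\<in>S. mF \<phi> s = s" by (simp add: ps)
  ultimately show ?thesis by blast
qed


definition qv :: "('f,'v) graph \<Rightarrow> 'f \<Rightarrow> 'f \<Rightarrow> 'v \<Rightarrow> 'v" where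
  "qv d s t v = (if v = bd d t then bd d s else v)"

definition dcon :: "('f,'v) graph \<Rightarrow> 'f \<Rightarrow> 'f \<Rightarrow> ('f,'v) graph" where
  "dcon d s t = \<lparr> flags = flags d - {s,t}, verts = qv d s t ` verts d,
     bd = (\<lambda>f. if f \<in> flags d - {s,t} then qv d s t (bd d f) else undefined),
     gi = (\<lambda>f. if f \<in> flags d - {s,t} then gi d f else undefined) \<rparr>"

definition ccon :: "('f,'v) graph \<Rightarrow> 'f \<Rightarrow> 'f \<Rightarrow> ('f,'v) gmor" where
  "ccon d s t = \<lparr> mV = (\<lambda>v. if v \<in> verts d then qv d s t v else undefined),
     mF = (\<lambda>f. if f \<in> flags d - {s,t} then f else undefined),
     mI = (\<lambda>f. if f = s then t else if f = t then s else undefined) \<rparr>"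

lemma dcon_simps: "flags (dcon d s t) = flags d - {s,t}" "verts (dcon d s t) = qv d s t ` verts d"
  "bd (dcon d s t) f = (if f \<in> flags d - {s,t} then qv d s t (bd d f) else undefined)"
  "gi (dcon d s t) f = (if f \<in> flags d - {s,t} then gi d f else undefined)"
  by (simp_all add: dcon_def)

lemma ccon_simps: "mV (ccon d s t) v = (if v \<in> verts d then qv d s t v else undefined)"
  "mF (ccon d s t) f = (if f \<in> flags d - {s,t} then f else undefined)"
  "mI (ccon d s t) f = (if f = s then t else if f = t then s else undefined)"
  by (simp_all add: ccon_def)

lemma qv_simps: "qv d s t (bd d s) = bd d s" "qv d s t (bd d t) = bd d s"
  by (simp_all add: qv_def)

context
  fixes d :: "('f,'v) graph" and s t :: 'f
  assumes w: "wf_graph d" and s: "s \<in> flags d" and st: "gi d s = t" and ns: "t \<noteq> s"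
begin

lemma tF: "t \<in> flags d" using wfD(4)[OF w s] st by simp
lemma ts: "gi d t = s" using wfD(5)[OF w s] st by simp

lemma gi_avoid: "f \<in> flags d - {s,t} \<Longrightarrow> gi d f \<in> flags d - {s,t}"
proof -
  assume f: "f \<in> flags d - {s,t}"
  have "gi d f \<in> flags d" using wfD(4)[OF w] f by blast
  moreover have "gi d f \<noteq> s"
  proof
    assume "gi d f = s" hence "gi d (gi d f) = t" using st by simp
    thus False using f wfD(5)[OF w, of f] by simp
  qed
  moreover have "gi d f \<noteq> t"
  proof
    assume "gi d f = t" hence "gi d (gi d f) = s" using ts by simp
    thus False using f wfD(5)[OF w, of f] by simp
  qed
  ultimately show ?thesis by blast
qed

lemma dcon_wf: "wf_graph (dcon d s t)"
  unfolding wf_graph_def dcon_simps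
proof (intro conjI ballI allI impI)
  show "finite (flags d - {s,t})" "finite (qv d s t ` verts d)" using wfD(1,2)[OF w] by auto
  fix f
  { assume f: "f \<in> flags d - {s,t}"
    show "(if f \<in> flags d - {s, t} then qv d s t (bd d f) else undefined) \<in> qv d s t ` verts d"
      using f wfD(3)[OF w] by auto
    show "(if f \<in> flags d - {s, t} then gi d f else undefined) \<in> flags d - {s, t}" using f gi_avoid by simp
    show "(if (if f \<in> flags d - {s, t} then gi d f else undefined) \<in> flags d - {s, t}
        then gi d (if f \<in> flags d - {s, t} then gi d f else undefined) else undefined) = f"
      using f gi_avoid wfD(5)[OF w] by simp }
  { assume "f \<notin> flags d - {s,t}"
    thus "(if f \<in> flags d - {s, t} then qv d s t (bd d f) else undefined) = undefined"
      "(if f \<in> flags d - {s, t} then gi d f else undefined) = undefined"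
      by (simp_all only: if_not_P[OF \<open>f \<notin> flags d - {s,t}\<close>] if_False) }
qed

lemma dcon_outer: "outer_flags d = S \<Longrightarrow> outer_flags (dcon d s t) = S"
  unfolding outer_flags_def dcon_simps using ns ts st by auto

lemma dcon_card: "card (flags (dcon d s t)) < card (flags d)"
  unfolding dcon_simps by (rule psubset_card_mono[OF wfD(1)[OF w]]) (use s in blast)

lemma dcon_conn:
  assumes c: "connected_graph d"
  shows "connected_graph (dcon d s t)"
proof -
  have estep: "\<And>y z. (y,z) \<in> adj d \<Longrightarrow> (qv d s t y, qv d s t z) \<in> (adj (dcon d s t))\<^sup>*"
  proof -
    fix y z assume "(y,z) \<in> adj d"
    then obtain f where f: "f \<in> flags d" "gi d f \<noteq> f" and yz: "y = bd d f" "z = bd d (gi d f)"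
      unfolding adj_def by blast
    show "(qv d s t y, qv d s t z) \<in> (adj (dcon d s t))\<^sup>*"
    proof (cases "f \<in> {s,t}")
      case True
      hence "f = s \<or> f = t" by blast
      hence "qv d s t y = qv d s t z"
      proof
        assume "f = s" thus ?thesis using yz st qv_simps[of d s t] by simp
      next
        assume "f = t" thus ?thesis using yz ts qv_simps[of d s t] by simp
      qed
      thus ?thesis by simp
    next
      case False
      hence f': "f \<in> flags d - {s,t}" using f by blast
      have g': "gi d f \<in> flags d - {s,t}" using gi_avoid[OF f'] .
      have "(bd (dcon d s t) f, bd (dcon d s t) (gi (dcon d s t) f)) \<in> adj (dcon d s t)"
        unfolding adj_def dcon_simps(1) using f' f(2) by (auto simp: dcon_simps)
      hence "(qv d s t y, qv d s t z) \<in> adj (dcon d s t)" using f' g' yz by (simp add: dcon_simps)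
      thus ?thesis by simp
    qed
  qed
  have path: "\<And>v w. (v,w) \<in> (adj d)\<^sup>* \<Longrightarrow> (qv d s t v, qv d s t w) \<in> (adj (dcon d s t))\<^sup>*"
  proof -
    fix v w assume "(v,w) \<in> (adj d)\<^sup>*"
    thus "(qv d s t v, qv d s t w) \<in> (adj (dcon d s t))\<^sup>*"
    proof (induction rule: rtrancl_induct)
      case base thus ?case by simp
    next
      case (step y z)
      have "(qv d s t y, qv d s t z) \<in> (adj (dcon d s t))\<^sup>*" by (rule estep[OF step(2)])
      from rtrancl_trans[OF step.IH this] show ?case .
    qed
  qed
  show ?thesis unfolding connected_graph_def
  proof (intro conjI ballI)
    show "wf_graph (dcon d s t)" by (rule dcon_wf)
    show "verts (dcon d s t) \<noteq> {}" using c by (auto simp: connected_graph_def dcon_simps)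
    fix v' w' assume "v' \<in> verts (dcon d s t)" "w' \<in> verts (dcon d s t)"
    then obtain v w where "v \<in> verts d" "w \<in> verts d" "v' = qv d s t v" "w' = qv d s t w"
      by (auto simp: dcon_simps)
    thus "(v', w') \<in> (adj (dcon d s t))\<^sup>*" using c path by (auto simp: connected_graph_def)
  qed
qed

lemma ccon_gm: "graph_morphism (agg d) (agg (dcon d s t)) (ccon d s t)"
proof -
  have dF: "flags (agg d) - mF (ccon d s t) ` flags (agg (dcon d s t)) = {s,t}"
  proof -
    have "mF (ccon d s t) ` (flags d - {s,t}) = flags d - {s,t}"
      by (rule image_cong[of _ _ _ id, simplified]) (simp_all add: ccon_simps)
    thus ?thesis using s tF by (auto simp: agg_simps dcon_simps)
  qed
  have wd': "wf_graph (dcon d s t)" by (rule dcon_wf)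
  show ?thesis unfolding graph_morphism_def dF
  proof (intro conjI)
    show "wf_graph (agg d)" "wf_graph (agg (dcon d s t))"
      using agg_aggregate[OF w] agg_aggregate[OF wd'] by (simp_all add: aggregate_def)
    show "mV (ccon d s t) ` verts (agg d) = verts (agg (dcon d s t))"
      unfolding agg_simps dcon_simps by (rule image_cong) (simp_all add: ccon_simps)
    show "mF (ccon d s t) ` flags (agg (dcon d s t)) \<subseteq> flags (agg d)"
      by (auto simp: agg_simps dcon_simps ccon_simps)
    show "inj_on (mF (ccon d s t)) (flags (agg (dcon d s t)))"
      by (auto simp: inj_on_def agg_simps dcon_simps ccon_simps)
    show "\<forall>f\<in>{s, t}. mI (ccon d s t) f \<in> {s, t} \<and> mI (ccon d s t) (mI (ccon d s t) f) = f \<and> mI (ccon d s t) f \<noteq> f"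
      using ns by (auto simp: ccon_simps)
    show "\<forall>f'\<in>flags (agg (dcon d s t)). mV (ccon d s t) (bd (agg d) (mF (ccon d s t) f')) = bd (agg (dcon d s t)) f'"
      using wfD(3)[OF w] by (auto simp: agg_simps dcon_simps ccon_simps)
    show "\<forall>f\<in>{s, t}. mV (ccon d s t) (bd (agg d) f) = mV (ccon d s t) (bd (agg d) (mI (ccon d s t) f))"
      using wfD(3)[OF w s] wfD(3)[OF w tF] ns by (auto simp: agg_simps ccon_simps qv_simps)
    show "\<forall>f\<in>{s, t}. gi (agg d) f \<noteq> f \<and> mI (ccon d s t) f = gi (agg d) f \<or>
        gi (agg d) f = f \<and> gi (agg d) (mI (ccon d s t) f) = mI (ccon d s t) f"
      using s tF ns by (auto simp: agg_simps ccon_simps)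
    show "\<forall>f'\<in>flags (agg (dcon d s t)). gi (agg d) (mF (ccon d s t) f') \<noteq> mF (ccon d s t) f' \<longrightarrow>
        gi (agg d) (mF (ccon d s t) f') = mF (ccon d s t) (gi (agg (dcon d s t)) f')"
      by (auto simp: agg_simps dcon_simps ccon_simps)
    show "\<forall>v. v \<notin> verts (agg d) \<longrightarrow> mV (ccon d s t) v = undefined" by (simp add: agg_simps ccon_simps)
    show "\<forall>f'. f' \<notin> flags (agg (dcon d s t)) \<longrightarrow> mF (ccon d s t) f' = undefined"
      by (simp add: agg_simps dcon_simps ccon_simps)
    show "\<forall>f. f \<notin> {s, t} \<longrightarrow> mI (ccon d s t) f = undefined" by (simp add: ccon_simps)
  qed
qed

lemma qv_iff:
  assumes "v \<in> verts d" "u \<in> verts d"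
  shows "(qv d s t v = qv d s t u) = (v = u \<or> {v,u} = {bd d s, bd d t})"
  unfolding qv_def by (auto simp: doubleton_eq_iff)

lemma ccon_contr: "contraction_at (agg d) (agg (dcon d s t)) (ccon d s t) s t"
  unfolding contraction_at_def
proof (intro conjI)
  show "graph_morphism (agg d) (agg (dcon d s t)) (ccon d s t)" by (rule ccon_gm)
  show "s \<in> flags (agg d)" "t \<in> flags (agg d)" using s tF by (simp_all add: agg_simps)
  show "s \<noteq> t" using ns by simp
  show "mF (ccon d s t) ` flags (agg (dcon d s t)) = flags (agg d) - {s, t}"
    unfolding agg_simps dcon_simps by (rule image_cong[of _ _ _ id, simplified]) (simp_all add: ccon_simps)
  show "mI (ccon d s t) s = t" by (simp add: ccon_simps)
  show "\<forall>v\<in>verts (agg d). \<forall>w\<in>verts (agg d). (mV (ccon d s t) v = mV (ccon d s t) w) =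
      (v = w \<or> {v, w} = {bd (agg d) s, bd (agg d) t})"
    using qv_iff by (simp add: agg_simps ccon_simps)
  show "\<forall>f'\<in>flags (agg (dcon d s t)). mF (ccon d s t) (gi (agg (dcon d s t)) f') = gi (agg d) (mF (ccon d s t) f')"
    by (simp add: agg_simps dcon_simps ccon_simps)
qed

lemma ccon_ctd: "ctd_morphism (agg d) (agg (dcon d s t)) (ccon d s t)"
proof -
  have a1: "aggregate (agg d)" "aggregate (agg (dcon d s t))"
    using agg_aggregate[OF w] agg_aggregate[OF dcon_wf] by blast+
  have "virtual_edge_contraction (agg d) (agg (dcon d s t)) (ccon d s t) \<or>
        loop_contraction (agg d) (agg (dcon d s t)) (ccon d s t)"
    unfolding virtual_edge_contraction_def loop_contraction_def using a1 ccon_contr by blast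
  thus ?thesis unfolding ctd_morphism_def by (auto intro: generated.gen_base)
qed

end


lemma ess_phi:
  assumes fin: "finite S"
  shows "connected_graph d \<Longrightarrow> outer_flags d = S \<Longrightarrow>
    \<exists>\<phi>. ctd_morphism (agg d) (star S v0) \<phi> \<and> (\<forall>s\<in>S. mF \<phi> s = s) \<and> (\<forall>f\<in>flags d - S. mI \<phi> f = gi d f)"
proof (induction "card (flags d)" arbitrary: d rule: less_induct)
  case less
  have w: "wf_graph d" using less.prems by (simp add: connected_graph_def)
  have Ssub: "S \<subseteq> flags d" using less.prems(2) unfolding outer_flags_def by blast
  show ?case
  proof (cases "flags d = S")
    case True
    obtain \<phi> where "ctd_morphism (agg d) (star S v0) \<phi>" "\<forall>s\<in>S. mF \<phi> s = s"
      using base_case[OF less.prems True fin] by blast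
    thus ?thesis using True by blast
  next
    case False
    then obtain s where sF: "s \<in> flags d" and sS: "s \<notin> S" using Ssub by blast
    define t where "t = gi d s"
    have ns: "t \<noteq> s" using sF sS less.prems(2) unfolding outer_flags_def t_def by blast
    note ctx = w sF t_def[symmetric] ns
    define d' where "d' = dcon d s t"
    have c': "connected_graph d'" unfolding d'_def by (rule dcon_conn[OF ctx less.prems(1)])
    have o': "outer_flags d' = S" unfolding d'_def by (rule dcon_outer[OF ctx less.prems(2)])
    have lt: "card (flags d') < card (flags d)" unfolding d'_def by (rule dcon_card[OF ctx])
    obtain \<phi>' where ph': "ctd_morphism (agg d') (star S v0) \<phi>'" and F': "\<forall>s\<in>S. mF \<phi>' s = s"
      and I': "\<forall>f\<in>flags d' - S. mI \<phi>' f = gi d' f"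
      using less.hyps[OF lt c' o'] by blast
    let ?c = "ccon d s t"
    have cc: "ctd_morphism (agg d) (agg d') ?c" unfolding d'_def by (rule ccon_ctd[OF ctx])
    define \<phi> where "\<phi> = gcomp (agg d) (agg d') (star S v0) \<phi>' ?c"
    have ct: "ctd_morphism (agg d) (star S v0) \<phi>" unfolding \<phi>_def by (rule ctd_comp[OF cc ph'])
    have tF: "t \<in> flags d" by (rule tF[OF ctx])
    have ts: "gi d t = s" by (rule ts[OF ctx])
    have fd': "flags d' = flags d - {s,t}" unfolding d'_def by (simp add: dcon_simps)
    have tS: "t \<notin> S" using tF ts ns less.prems(2) unfolding outer_flags_def by auto
    have Sd': "S \<subseteq> flags d'" unfolding fd' using Ssub sS tS by blast
    have cF: "\<And>f. f \<in> flags d' \<Longrightarrow> mF ?c f = f" unfolding fd' by (simp add: ccon_simps)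
    have Fm: "\<forall>x\<in>S. mF \<phi> x = x"
    proof
      fix x assume x: "x \<in> S"
      have "x \<in> flags d'" using x Sd' by blast
      thus "mF \<phi> x = x" unfolding \<phi>_def using x F' cF by (simp add: gcomp_simps star_simps)
    qed
    have cinj: "inj_on (mF ?c) (flags (agg d'))" by (auto simp: inj_on_def cF agg_simps)
    have imS: "mF ?c ` mF \<phi>' ` flags (star S v0) = S"
    proof -
      have "mF \<phi>' ` S = id ` S" using F' by (intro image_cong) simp_all
      hence "mF \<phi>' ` S = S" by simp
      moreover have "mF ?c ` S = S" using cF Sd' by (force)
      ultimately show ?thesis by (simp add: star_simps)
    qed
    have Im: "\<forall>f\<in>flags d - S. mI \<phi> f = gi d f"
    proof
      fix f assume f: "f \<in> flags d - S"
      have dom: "f \<in> flags (agg d) - mF ?c ` mF \<phi>' ` flags (star S v0)" unfolding imS using f by (simp add: agg_simps)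
      show "mI \<phi> f = gi d f"
      proof (cases "f \<in> flags d'")
        case True
        have fe: "f = mF ?c f" using cF[OF True] by simp
        have f'': "f \<in> flags (agg d')" using True by (simp add: agg_simps)
        have "mI \<phi> f = mF ?c (mI \<phi>' f)" unfolding \<phi>_def by (rule gcomp_mI_in[OF dom fe f'' cinj])
        moreover have "mI \<phi>' f = gi d' f" using I' True f by blast
        moreover have "gi d' f = gi d f" using True unfolding d'_def fd' by (simp add: dcon_simps)
        moreover have "gi d f \<in> flags d'" using gi_avoid[OF ctx] True unfolding fd' by blast
        ultimately show ?thesis using cF by simp
      next
        case False
        hence fst: "f = s \<or> f = t" using f unfolding fd' by blast
        have "f \<notin> mF ?c ` flags (agg d')" using False cF by (auto simp: agg_simps)
        hence "mI \<phi> f = mI ?c f" unfolding \<phi>_def by (rule gcomp_mI_out[OF dom])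
        thus ?thesis using fst ns ts by (auto simp: ccon_simps t_def)
      qed
    qed
    show ?thesis using ct Fm Im by blast
  qed
qed



lemma gid_cong: "verts G' = verts G \<Longrightarrow> flags G' = flags G \<Longrightarrow> gid G' = gid G"
  by (simp add: gid_def)

lemma gid_iso: "wf_graph G \<Longrightarrow> graph_iso G G (gid G)"
proof -
  assume w: "wf_graph G"
  have im: "mF (gid G) ` flags G = flags G" by (simp add: gid_img)
  have gm: "graph_morphism G G (gid G)"
    unfolding graph_morphism_def im
  proof (intro conjI)
    show "mV (gid G) ` verts G = verts G" by (force simp: gid_simps)
    show "inj_on (mF (gid G)) (flags G)" by (rule gid_inj)
    show "\<forall>f'\<in>flags G. mV (gid G) (bd G (mF (gid G) f')) = bd G f'" using wfD(3)[OF w] by (simp add: gid_simps)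
    show "\<forall>f'\<in>flags G. gi G (mF (gid G) f') \<noteq> mF (gid G) f' \<longrightarrow> gi G (mF (gid G) f') = mF (gid G) (gi G f')"
      using wfD(4)[OF w] by (simp add: gid_simps)
  qed (simp_all add: w gid_simps)
  show ?thesis unfolding graph_iso_def
  proof (intro conjI)
    show "bij_betw (mV (gid G)) (verts G) (verts G)" unfolding bij_betw_def inj_on_def by (force simp: gid_simps)
    show "bij_betw (mF (gid G)) (flags G) (flags G)" unfolding bij_betw_def using gid_inj im by simp
    show "\<forall>f'\<in>flags G. mF (gid G) (gi G f') = gi G (mF (gid G) f')" using wfD(4)[OF w] by (simp add: gid_simps)
  qed fact
qed

lemma compat:
  assumes X: "aggregate X" and Y: "aggregate Y"
  and ph: "graph_morphism X (star S v0) \<phi>" and ph': "graph_morphism Y (star S v0) \<phi>'"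
  and ps: "graph_morphism (gr S X \<phi>) (gr S Y \<phi>') \<psi>"
  and F: "\<forall>s\<in>S. mF \<psi> (mF \<phi>' s) = mF \<phi> s"
  shows "gcomp X Y (star S v0) \<phi>' \<psi> = \<phi>"
proof (rule gmor.equality)
  have VX: "mV \<phi> ` verts X = {v0}" using gm_V[OF ph] unfolding star_simps .
  have VY: "mV \<phi>' ` verts Y = {v0}" using gm_V[OF ph'] unfolding star_simps .
  show "mV (gcomp X Y (star S v0) \<phi>' \<psi>) = mV \<phi>"
  proof
    fix v show "mV (gcomp X Y (star S v0) \<phi>' \<psi>) v = mV \<phi> v"
    proof (cases "v \<in> verts X")
      case True
      have "mV \<psi> v \<in> verts Y" using gm_Vin[OF ps] True by (simp add: gr_simps)
      hence "mV \<phi>' (mV \<psi> v) \<in> {v0}" using VY by (metis imageI)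
      moreover have "mV \<phi> v \<in> {v0}" using VX True by (metis imageI)
      ultimately show ?thesis using True by (simp add: gcomp_simps)
    next
      case False thus ?thesis using gm_uV[OF ph] by (simp add: gcomp_simps)
    qed
  qed
  show "mF (gcomp X Y (star S v0) \<phi>' \<psi>) = mF \<phi>"
  proof
    fix f show "mF (gcomp X Y (star S v0) \<phi>' \<psi>) f = mF \<phi> f"
      using F gm_uF[OF ph] by (cases "f \<in> S") (simp_all add: gcomp_simps star_simps)
  qed
  have im': "mF \<phi>' ` S \<subseteq> flags Y" using gm_Fim[OF ph'] unfolding star_simps .
  have imeq: "mF \<psi> ` mF \<phi>' ` S = mF \<phi> ` S"
  proof -
    have "(\<lambda>x. mF \<psi> (mF \<phi>' x)) ` S = mF \<phi> ` S" using F by (intro image_cong) simp_all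
    thus ?thesis by (simp add: image_image)
  qed
  have pinj: "inj_on (mF \<psi>) (flags Y)" using gm_inj[OF ps] by (simp add: gr_simps)
  show "mI (gcomp X Y (star S v0) \<phi>' \<psi>) = mI \<phi>"
  proof
    fix f
    show "mI (gcomp X Y (star S v0) \<phi>' \<psi>) f = mI \<phi> f"
    proof (cases "f \<in> flags X - mF \<phi> ` S")
      case False
      have "f \<notin> flags X - mF \<psi> ` mF \<phi>' ` flags (star S v0)" using False imeq by (simp add: star_simps)
      hence "mI (gcomp X Y (star S v0) \<phi>' \<psi>) f = undefined" by (rule gcomp_mI_undef)
      moreover have "mI \<phi> f = undefined" using gm_uI[OF ph] False by (simp add: star_simps)
      ultimately show ?thesis by simp
    next
      case d: True
      have dom: "f \<in> flags X - mF \<psi> ` mF \<phi>' ` flags (star S v0)" using d imeq by (simp add: star_simps)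
      have gi1: "gi (gr S X \<phi>) f = mI \<phi> f" "mI \<phi> f \<noteq> f" using gr_gi_out[OF X ph d] by blast+
      show ?thesis
      proof (cases "f \<in> mF \<psi> ` flags Y")
        case True
        then obtain g where g: "g \<in> flags Y" and fg: "f = mF \<psi> g" by blast
        have gS: "g \<notin> mF \<phi>' ` S" using d fg imeq by blast
        have dg: "g \<in> flags Y - mF \<phi>' ` S" using g gS by blast
        have "gi (gr S X \<phi>) (mF \<psi> g) \<noteq> mF \<psi> g" using gi1 fg by simp
        hence "gi (gr S X \<phi>) (mF \<psi> g) = mF \<psi> (gi (gr S Y \<phi>') g)" using gm_C[OF ps] g by (simp add: gr_simps)
        hence "mI \<phi> f = mF \<psi> (mI \<phi>' g)" using gi1 fg gr_gi_out(1)[OF Y ph' dg] by simp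
        moreover have "mI (gcomp X Y (star S v0) \<phi>' \<psi>) f = mF \<psi> (mI \<phi>' g)"
          by (rule gcomp_mI_in[OF dom fg g pinj])
        ultimately show ?thesis by simp
      next
        case False
        have fd: "f \<in> flags (gr S X \<phi>) - mF \<psi> ` flags (gr S Y \<phi>')" using d False by (simp add: gr_simps)
        have "mI \<psi> f = gi (gr S X \<phi>) f" using gm_E[OF ps fd] gi1 by auto
        moreover have "mI (gcomp X Y (star S v0) \<phi>' \<psi>) f = mI \<psi> f" by (rule gcomp_mI_out[OF dom False])
        ultimately show ?thesis using gi1 by simp
      qed
    qed
  qed
qed simp



lemma unM:
  assumes f: "graph_morphism A B f" and ra: "graph_morphism A FA ra" and ra': "graph_morphism FA A ra'"
  and rb: "graph_morphism B FB rb" and rb': "graph_morphism FB B rb'"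
  and iA: "gcomp A FA A ra' ra = gid A" and iB: "gcomp B FB B rb' rb = gid B"
  shows "gcomp A FA B (gcomp FA FB B rb' (gcomp FA A FB (gcomp A B FB rb f) ra')) ra = f"
proof -
  have X: "graph_morphism A FB (gcomp A B FB rb f)" by (rule gm_comp[OF f rb])
  have e1: "gcomp FA FB B rb' (gcomp FA A FB (gcomp A B FB rb f) ra') =
      gcomp FA A B (gcomp A FB B rb' (gcomp A B FB rb f)) ra'" using gcomp_assoc[OF ra' X rb'] by simp
  have e2: "gcomp A FB B rb' (gcomp A B FB rb f) = f"
    using gcomp_assoc[OF f rb rb'] iB gcomp_id_left[OF f] by simp
  have e3: "gcomp A FA B (gcomp FA A B f ra') ra = gcomp A A B f (gcomp A FA A ra' ra)"
    using gcomp_assoc[OF ra ra' f] by simp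
  show ?thesis unfolding e1 e2 e3 iA using gcomp_id_right[OF f] .
qed

lemma compM:
  assumes f: "graph_morphism A B f" and g: "graph_morphism B C g" and ra': "graph_morphism FA A ra'"
  and rb: "graph_morphism B FB rb" and rb': "graph_morphism FB B rb'" and rc: "graph_morphism C FC rc"
  and iB: "gcomp B FB B rb' rb = gid B"
  shows "gcomp FA A FC (gcomp A C FC rc (gcomp A B C g f)) ra' =
    gcomp FA FB FC (gcomp FB B FC (gcomp B C FC rc g) rb') (gcomp FA A FB (gcomp A B FB rb f) ra')"
proof -
  have X: "graph_morphism A FB (gcomp A B FB rb f)" by (rule gm_comp[OF f rb])
  have P: "graph_morphism FA FB (gcomp FA A FB (gcomp A B FB rb f) ra')" by (rule gm_comp[OF ra' X])
  have Q: "graph_morphism B FC (gcomp B C FC rc g)" by (rule gm_comp[OF g rc])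
  have e1: "gcomp FA FB FC (gcomp FB B FC (gcomp B C FC rc g) rb') (gcomp FA A FB (gcomp A B FB rb f) ra') =
     gcomp FA B FC (gcomp B C FC rc g) (gcomp FA FB B rb' (gcomp FA A FB (gcomp A B FB rb f) ra'))"
    by (rule gcomp_assoc[OF P rb' Q])
  have e2: "gcomp FA FB B rb' (gcomp FA A FB (gcomp A B FB rb f) ra') =
      gcomp FA A B (gcomp A FB B rb' (gcomp A B FB rb f)) ra'" using gcomp_assoc[OF ra' X rb'] by simp
  have e3: "gcomp A FB B rb' (gcomp A B FB rb f) = f"
    using gcomp_assoc[OF f rb rb'] iB gcomp_id_left[OF f] by simp
  have e4: "gcomp FA B FC (gcomp B C FC rc g) (gcomp FA A B f ra') = gcomp FA A FC (gcomp A B FC (gcomp B C FC rc g) f) ra'"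
    using gcomp_assoc[OF ra' f Q] by simp
  have e5: "gcomp A B FC (gcomp B C FC rc g) f = gcomp A C FC rc (gcomp A B C g f)"
    by (rule gcomp_assoc[OF f g rc])
  show ?thesis unfolding e1 e2 e3 e4 e5 ..
qed

lemma idM:
  assumes ra: "graph_morphism A FA ra" and iA': "gcomp FA A FA ra ra' = gid FA"
  shows "gcomp FA A FA (gcomp A A FA ra (gid A)) ra' = gid FA"
  using gcomp_id_right[OF ra] iA' by simp

definition pi_of :: "'f set \<Rightarrow> ('f,'v) graph \<times> ('f,'v) gmor \<Rightarrow> 'f \<Rightarrow> 'f" where
  "pi_of S a = (SOME \<pi>. bij \<pi> \<and> (\<forall>s\<in>S. \<pi> (mF (snd a) s) = s) \<and> ((\<forall>s\<in>S. mF (snd a) s = s) \<longrightarrow> \<pi> = id))"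

lemma pi_of_prop:
  assumes fin: "finite S" and inj: "inj_on (mF (snd a)) S"
  shows "bij (pi_of S a) \<and> (\<forall>s\<in>S. pi_of S a (mF (snd a) s) = s) \<and> ((\<forall>s\<in>S. mF (snd a) s = s) \<longrightarrow> pi_of S a = id)"
proof -
  have "\<exists>\<pi>. bij \<pi> \<and> (\<forall>s\<in>S. \<pi> (mF (snd a) s) = s) \<and> ((\<forall>s\<in>S. mF (snd a) s = s) \<longrightarrow> \<pi> = id)"
  proof (cases "\<forall>s\<in>S. mF (snd a) s = s")
    case True thus ?thesis by (intro exI[of _ id]) simp
  next
    case False
    obtain \<pi> where "bij \<pi>" "\<forall>s\<in>S. \<pi> (mF (snd a) s) = s" using perm_exists[OF fin inj] by blast
    thus ?thesis using False by blast
  qed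
  thus ?thesis unfolding pi_of_def by (rule someI_ex)
qed

definition Fo :: "'f set \<Rightarrow> ('f,'v) graph \<times> ('f,'v) gmor \<Rightarrow> ('f,'v) graph" where
  "Fo S a = rel (pi_of S a) (gr S (fst a) (snd a))"

definition Fm :: "'f set \<Rightarrow> ('f,'v) graph \<times> ('f,'v) gmor \<Rightarrow> ('f,'v) graph \<times> ('f,'v) gmor \<Rightarrow> ('f,'v) gmor \<Rightarrow> ('f,'v) gmor" where
  "Fm S a b \<psi> = gcomp (Fo S a) (gr S (fst a) (snd a)) (Fo S b)
     (gcomp (gr S (fst a) (snd a)) (gr S (fst b) (snd b)) (Fo S b) (rho (pi_of S b) (gr S (fst b) (snd b))) \<psi>)
     (rho' (pi_of S a) (gr S (fst a) (snd a)))"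

lemma ob_facts:
  assumes fin: "finite S" and a: "comma_ob S v0 a"
  shows "aggregate (fst a)" "ctd_morphism (fst a) (star S v0) (snd a)"
    "graph_morphism (fst a) (star S v0) (snd a)"
    "bij (pi_of S a)" "\<forall>s\<in>S. pi_of S a (mF (snd a) s) = s"
    "wf_graph (gr S (fst a) (snd a))"
    "IS_ob S (Fo S a)"
    "graph_iso (gr S (fst a) (snd a)) (Fo S a) (rho (pi_of S a) (gr S (fst a) (snd a)))"
    "graph_iso (Fo S a) (gr S (fst a) (snd a)) (rho' (pi_of S a) (gr S (fst a) (snd a)))"
    "gcomp (gr S (fst a) (snd a)) (Fo S a) (gr S (fst a) (snd a)) (rho' (pi_of S a) (gr S (fst a) (snd a))) (rho (pi_of S a) (gr S (fst a) (snd a))) = gid (gr S (fst a) (snd a))"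
    "gcomp (Fo S a) (gr S (fst a) (snd a)) (Fo S a) (rho (pi_of S a) (gr S (fst a) (snd a))) (rho' (pi_of S a) (gr S (fst a) (snd a))) = gid (Fo S a)"
proof -
  show X: "aggregate (fst a)" and c: "ctd_morphism (fst a) (star S v0) (snd a)" using a by (simp_all add: comma_ob_def)
  show g: "graph_morphism (fst a) (star S v0) (snd a)" using ctd_gm[OF c] .
  have inj: "inj_on (mF (snd a)) S" using gm_inj[OF g] unfolding star_simps .
  note P = pi_of_prop[OF fin inj]
  show b: "bij (pi_of S a)" and pp: "\<forall>s\<in>S. pi_of S a (mF (snd a) s) = s" using P by blast+
  show w: "wf_graph (gr S (fst a) (snd a))" by (rule gr_wf[OF X g])
  show "IS_ob S (Fo S a)" unfolding IS_ob_def Fo_def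
  proof
    show "connected_graph (rel (pi_of S a) (gr S (fst a) (snd a)))"
      by (rule rel_connected[OF b gr_connected[OF X c]])
    have "pi_of S a ` mF (snd a) ` S = S"
    proof -
      have "(\<lambda>x. pi_of S a (mF (snd a) x)) ` S = id ` S" using pp by (intro image_cong) simp_all
      thus ?thesis by (simp add: image_image)
    qed
    thus "outer_flags (rel (pi_of S a) (gr S (fst a) (snd a))) = S"
      unfolding rel_outer[OF b w] gr_outer[OF X g] .
  qed
  show "graph_iso (gr S (fst a) (snd a)) (Fo S a) (rho (pi_of S a) (gr S (fst a) (snd a)))"
    unfolding Fo_def by (rule rho_iso[OF b w])
  show "graph_iso (Fo S a) (gr S (fst a) (snd a)) (rho' (pi_of S a) (gr S (fst a) (snd a)))"
    unfolding Fo_def by (rule rho'_iso[OF b w])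
  show "gcomp (gr S (fst a) (snd a)) (Fo S a) (gr S (fst a) (snd a)) (rho' (pi_of S a) (gr S (fst a) (snd a))) (rho (pi_of S a) (gr S (fst a) (snd a))) = gid (gr S (fst a) (snd a))"
    unfolding Fo_def by (rule rho_inv1[OF b])
  show "gcomp (Fo S a) (gr S (fst a) (snd a)) (Fo S a) (rho (pi_of S a) (gr S (fst a) (snd a))) (rho' (pi_of S a) (gr S (fst a) (snd a))) = gid (Fo S a)"
    unfolding Fo_def by (rule rho_inv2[OF b])
qed



context
  fixes S :: "'f set" and v0 :: 'v
  assumes fin: "finite S"
begin

abbreviation "GA a \<equiv> gr S (fst a) (snd a)"
abbreviation "RA a \<equiv> rho (pi_of S a) (GA a)"
abbreviation "RA' a \<equiv> rho' (pi_of S a) (GA a)"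

lemma hom_sf:
  assumes h: "comma_hom S v0 a b f"
  shows "spanning_forest_morphism (GA a) (GA b) f" "graph_morphism (GA a) (GA b) f"
    "gcomp (fst a) (fst b) (star S v0) (snd b) f = snd a"
proof -
  have a: "comma_ob S v0 a" and b: "comma_ob S v0 b" and fo: "forest_morphism (fst a) (fst b) f"
    and eq: "gcomp (fst a) (fst b) (star S v0) (snd b) f = snd a" using h by (simp_all add: comma_hom_def)
  show "gcomp (fst a) (fst b) (star S v0) (snd b) f = snd a" by (rule eq)
  have "spanning_forest_morphism (gr S (fst a) (gcomp (fst a) (fst b) (star S v0) (snd b) f)) (GA b) f"
    by (rule forest_sf[OF fo ob_facts(2)[OF fin b]])
  thus s: "spanning_forest_morphism (GA a) (GA b) f" unfolding eq .
  show "graph_morphism (GA a) (GA b) f" by (rule sf_gm[OF s])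
qed

lemma isos:
  assumes a: "comma_ob S v0 a"
  shows "graph_morphism (GA a) (Fo S a) (RA a)" "graph_morphism (Fo S a) (GA a) (RA' a)"
    "spanning_forest_morphism (GA a) (Fo S a) (RA a)" "spanning_forest_morphism (Fo S a) (GA a) (RA' a)"
  using ob_facts(8,9)[OF fin a] iso_gm sf_iso by blast+

lemma inv_pi:
  assumes a: "comma_ob S v0 a" and s: "s \<in> S"
  shows "inv (pi_of S a) s = mF (snd a) s" "s \<in> pi_of S a ` flags (GA a)" "mF (snd a) s \<in> flags (GA a)"
proof -
  have b: "bij (pi_of S a)" and p: "pi_of S a (mF (snd a) s) = s" using ob_facts(4,5)[OF fin a] s by blast+
  show "inv (pi_of S a) s = mF (snd a) s" using bij_inv1[OF b, of "mF (snd a) s"] p by simp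
  show m: "mF (snd a) s \<in> flags (GA a)" using gm_Fin[OF ob_facts(3)[OF fin a]] s by (simp add: star_simps gr_simps)
  show "s \<in> pi_of S a ` flags (GA a)" using m p by (metis imageI)
qed

lemma homD:
  assumes h: "comma_hom S v0 a b f"
  shows "IS_hom S (Fo S a) (Fo S b) (Fm S a b f)"
proof -
  have a: "comma_ob S v0 a" and b: "comma_ob S v0 b" using h by (simp_all add: comma_hom_def)
  note hs = hom_sf[OF h]
  have sf: "spanning_forest_morphism (Fo S a) (Fo S b) (Fm S a b f)"
    unfolding Fm_def by (rule sf_comp[OF isos(4)[OF a] sf_comp[OF hs(1) isos(3)[OF b]]])
  have fx: "\<forall>s\<in>S. mF (Fm S a b f) s = s"
  proof
    fix s assume s: "s \<in> S"
    note ib = inv_pi[OF b s] and ia = inv_pi[OF a s]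
    have sFb: "s \<in> flags (Fo S b)" using ib(2) by (simp add: Fo_def rel_simps)
    have "mF (Fm S a b f) s = mF (RA' a) (mF f (mF (RA b) s))"
      unfolding Fm_def using sFb by (simp add: gcomp_mF_in)
    also have "mF (RA b) s = mF (snd b) s" using ib(1,2) by (simp add: rho_simps)
    also have "mF f (mF (snd b) s) = mF (snd a) s"
      using arg_cong[OF hs(3), of "\<lambda>p. mF p s"] s by (simp add: gcomp_mF_in star_simps)
    also have "mF (RA' a) (mF (snd a) s) = s" using ia(3) ob_facts(5)[OF fin a] s by (simp add: rho'_simps)
    finally show "mF (Fm S a b f) s = s" .
  qed
  show ?thesis unfolding IS_hom_def using ob_facts(7)[OF fin a] ob_facts(7)[OF fin b] sf sf_gm[OF sf] fx
    by blast
qed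

lemma Fm_id:
  assumes a: "comma_ob S v0 a"
  shows "Fm S a a (comma_id a) = gid (Fo S a)"
proof -
  have "comma_id a = gid (GA a)" unfolding comma_id_def by (rule gid_cong) (simp_all add: gr_simps)
  thus ?thesis unfolding Fm_def using idM[OF isos(1)[OF a] ob_facts(11)[OF fin a]] by simp
qed

lemma Fm_comp:
  assumes f: "comma_hom S v0 a b f" and g: "comma_hom S v0 b c g"
  shows "Fm S a c (comma_comp a b c g f) = gcomp (Fo S a) (Fo S b) (Fo S c) (Fm S b c g) (Fm S a b f)"
proof -
  have a: "comma_ob S v0 a" and b: "comma_ob S v0 b" and c: "comma_ob S v0 c"
    using f g by (simp_all add: comma_hom_def)
  have cc: "comma_comp a b c g f = gcomp (GA a) (GA b) (GA c) g f"
    unfolding comma_comp_def by (rule fun_cong[OF fun_cong[OF gcomp_cong]]) (simp_all add: gr_simps)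
  show ?thesis unfolding cc Fm_def
    by (rule compM[OF hom_sf(2)[OF f] hom_sf(2)[OF g] isos(2)[OF a] isos(1)[OF b] isos(2)[OF b] isos(1)[OF c]
      ob_facts(10)[OF fin b]])
qed

lemma Fm_faith:
  assumes f: "comma_hom S v0 a b f" and g: "comma_hom S v0 a b g" and e: "Fm S a b f = Fm S a b g"
  shows "f = g"
proof -
  have a: "comma_ob S v0 a" and b: "comma_ob S v0 b" using f by (simp_all add: comma_hom_def)
  have "f = gcomp (GA a) (Fo S a) (GA b) (gcomp (Fo S a) (Fo S b) (GA b) (RA' b) (Fm S a b f)) (RA a)"
    unfolding Fm_def by (rule unM[OF hom_sf(2)[OF f] isos(1,2)[OF a] isos(1,2)[OF b] ob_facts(10)[OF fin a]
        ob_facts(10)[OF fin b], symmetric])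
  also have "\<dots> = gcomp (GA a) (Fo S a) (GA b) (gcomp (Fo S a) (Fo S b) (GA b) (RA' b) (Fm S a b g)) (RA a)"
    unfolding e ..
  also have "\<dots> = g"
    unfolding Fm_def by (rule unM[OF hom_sf(2)[OF g] isos(1,2)[OF a] isos(1,2)[OF b] ob_facts(10)[OF fin a]
        ob_facts(10)[OF fin b]])
  finally show ?thesis .
qed

lemma Fm_full:
  assumes a: "comma_ob S v0 a" and b: "comma_ob S v0 b" and h: "IS_hom S (Fo S a) (Fo S b) h"
  shows "\<exists>f. comma_hom S v0 a b f \<and> Fm S a b f = h"
proof -
  have hg: "graph_morphism (Fo S a) (Fo S b) h" and hs: "spanning_forest_morphism (Fo S a) (Fo S b) h"
    and hf: "\<forall>s\<in>S. mF h s = s" using h by (simp_all add: IS_hom_def)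
  define \<psi> where "\<psi> = gcomp (GA a) (Fo S a) (GA b) (gcomp (Fo S a) (Fo S b) (GA b) (RA' b) h) (RA a)"
  have Fm: "Fm S a b \<psi> = h" unfolding Fm_def \<psi>_def
    by (rule unM[OF hg isos(2,1)[OF a] isos(2,1)[OF b] ob_facts(11)[OF fin a] ob_facts(11)[OF fin b]])
  have sfp: "spanning_forest_morphism (GA a) (GA b) \<psi>" unfolding \<psi>_def
    by (rule sf_comp[OF isos(3)[OF a] sf_comp[OF hs isos(4)[OF b]]])
  have gp: "graph_morphism (GA a) (GA b) \<psi>" by (rule sf_gm[OF sfp])
  have Xa: "aggregate (fst a)" and Xb: "aggregate (fst b)" using ob_facts(1)[OF fin a] ob_facts(1)[OF fin b] by simp_all
  have fo: "forest_morphism (fst a) (fst b) \<psi>"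
    using sf_forest[OF sfp] unfolding agg_gr agg_id[OF Xa] agg_id[OF Xb] .
  have F: "\<forall>s\<in>S. mF \<psi> (mF (snd b) s) = mF (snd a) s"
  proof
    fix s assume s: "s \<in> S"
    note ib = inv_pi[OF b s] and ia = inv_pi[OF a s]
    have pb: "pi_of S b (mF (snd b) s) = s" using ob_facts(5)[OF fin b] s by blast
    have sFa: "s \<in> flags (Fo S a)" using ia(2) by (simp add: Fo_def rel_simps)
    have "mF \<psi> (mF (snd b) s) = mF (RA a) (mF h (mF (RA' b) (mF (snd b) s)))"
      unfolding \<psi>_def using ib(3) by (simp add: gcomp_mF_in)
    also have "mF (RA' b) (mF (snd b) s) = s" using ib(3) pb by (simp add: rho'_simps)
    also have "mF h s = s" using hf s by blast
    also have "mF (RA a) s = mF (snd a) s" using ia(1,2) by (simp add: rho_simps)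
    finally show "mF \<psi> (mF (snd b) s) = mF (snd a) s" .
  qed
  have eq: "gcomp (fst a) (fst b) (star S v0) (snd b) \<psi> = snd a"
    by (rule compat[OF Xa Xb ob_facts(3)[OF fin a] ob_facts(3)[OF fin b] gp F])
  have "comma_hom S v0 a b \<psi>" unfolding comma_hom_def using a b fo eq by blast
  thus ?thesis using Fm by blast
qed

lemma gr_agg_eq:
  assumes w: "wf_graph d" and o: "outer_flags d = S" and F: "\<forall>s\<in>S. mF \<phi> s = s"
    and I: "\<forall>f\<in>flags d - S. mI \<phi> f = gi d f"
  shows "gr S (agg d) \<phi> = d"
proof -
  have im: "mF \<phi> ` S = S" using F by (metis (no_types, lifting) image_cong image_ident)
  have Sd: "S \<subseteq> flags d" using o unfolding outer_flags_def by blast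
  have "(\<lambda>f. if f \<in> flags d then (if f \<in> mF \<phi> ` S then f else mI \<phi> f) else undefined) = gi d"
  proof
    fix f show "(if f \<in> flags d then (if f \<in> mF \<phi> ` S then f else mI \<phi> f) else undefined) = gi d f"
    proof (cases "f \<in> flags d")
      case True
      show ?thesis
      proof (cases "f \<in> S")
        case True thus ?thesis using o im \<open>f \<in> flags d\<close> unfolding outer_flags_def by auto
      next
        case False thus ?thesis using I \<open>f \<in> flags d\<close> im by auto
      qed
    next
      case False thus ?thesis using wfD(7)[OF w] by simp
    qed
  qed
  thus ?thesis unfolding gr_def agg_def by simp
qed

lemma ess:
  assumes d: "IS_ob S d"
  shows "\<exists>a u v. comma_ob S v0 a \<and> IS_hom S (Fo S a) d u \<and> IS_hom S d (Fo S a) v \<and>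
          gcomp (Fo S a) d (Fo S a) v u = gid (Fo S a) \<and> gcomp d (Fo S a) d u v = gid d"
proof -
  have c: "connected_graph d" and o: "outer_flags d = S" using d by (simp_all add: IS_ob_def)
  have w: "wf_graph d" using c by (simp add: connected_graph_def)
  obtain \<phi> where ct: "ctd_morphism (agg d) (star S v0) \<phi>" and F: "\<forall>s\<in>S. mF \<phi> s = s"
    and I: "\<forall>f\<in>flags d - S. mI \<phi> f = gi d f" using ess_phi[OF fin c o] by blast
  define a where "a = (agg d, \<phi>)"
  have ob: "comma_ob S v0 a" unfolding comma_ob_def a_def using agg_aggregate[OF w] ct by simp
  have inj: "inj_on (mF (snd a)) S" using gm_inj[OF ctd_gm[OF ct]] by (simp add: a_def star_simps)
  have pid: "pi_of S a = id" using pi_of_prop[OF fin inj] F by (simp add: a_def)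
  have Fa: "Fo S a = d" unfolding Fo_def pid using gr_agg_eq[OF w o F I] rel_id[OF w] by (simp add: a_def)
  have hid: "IS_hom S d d (gid d)"
    unfolding IS_hom_def using d iso_gm[OF gid_iso[OF w]] sf_iso[OF gid_iso[OF w]] o
    by (auto simp: gid_simps outer_flags_def)
  have cid: "gcomp d d d (gid d) (gid d) = gid d" by (rule gcomp_id_left[OF iso_gm[OF gid_iso[OF w]]])
  show ?thesis
    by (rule exI[of _ a], rule exI[of _ "gid d"], rule exI[of _ "gid d"]) (simp add: Fa ob hid cid)
qed

end

theorem prop_main:
  fixes S :: "'f set" and v0 :: 'v
  assumes fin: "finite S"
  shows "equivalent_cats
           (comma_ob S v0) (comma_hom S v0) comma_id comma_comp
           (IS_ob S :: ('f,'v) graph \<Rightarrow> bool) (IS_hom S) gid (\<lambda>G H K q p. gcomp G H K q p)"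
  unfolding equivalent_cats_def
proof (rule exI[of _ "Fo S"], rule exI[of _ "Fm S"], intro conjI allI impI)
  fix a assume "comma_ob S v0 a"
  thus "IS_ob S (Fo S a)" by (rule ob_facts(7)[OF fin])
next
  fix a b f assume "comma_ob S v0 a" "comma_ob S v0 b" and h: "comma_hom S v0 a b f"
  show "IS_hom S (Fo S a) (Fo S b) (Fm S a b f)" by (rule homD[OF fin h])
next
  fix a assume a: "comma_ob S v0 a"
  show "Fm S a a (comma_id a) = gid (Fo S a)" by (rule Fm_id[OF fin a])
next
  fix a b c f g assume "comma_ob S v0 a" "comma_ob S v0 b" "comma_ob S v0 c"
    and f: "comma_hom S v0 a b f" and g: "comma_hom S v0 b c g"
  show "Fm S a c (comma_comp a b c g f) = gcomp (Fo S a) (Fo S b) (Fo S c) (Fm S b c g) (Fm S a b f)"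
    by (rule Fm_comp[OF fin f g])
next
  fix a b f g assume "comma_ob S v0 a" "comma_ob S v0 b" and f: "comma_hom S v0 a b f"
    and g: "comma_hom S v0 a b g" and e: "Fm S a b f = Fm S a b g"
  show "f = g" by (rule Fm_faith[OF fin f g e])
next
  fix a b h assume a: "comma_ob S v0 a" and b: "comma_ob S v0 b" and h: "IS_hom S (Fo S a) (Fo S b) h"
  show "\<exists>f. comma_hom S v0 a b f \<and> Fm S a b f = h" by (rule Fm_full[OF fin a b h])
next
  fix d assume d: "IS_ob S (d :: ('f,'v) graph)"
  show "\<exists>a u v. comma_ob S v0 a \<and> IS_hom S (Fo S a) d u \<and> IS_hom S d (Fo S a) v \<and>
          gcomp (Fo S a) d (Fo S a) v u = gid (Fo S a) \<and> gcomp d (Fo S a) d u v = gid d"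
    by (rule ess[OF fin d])
qed


theorem proposition5p5:
  fixes S :: "'f set" and v0 :: 'v
  assumes "finite S"
  shows "equivalent_cats
           (comma_ob S v0) (comma_hom S v0) comma_id comma_comp
           (IS_ob S :: ('f,'v) graph \<Rightarrow> bool) (IS_hom S) gid (\<lambda>G H K q p. gcomp G H K q p)"
  by (rule prop_main[OF assms])

end
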